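(* Fix $\alpha\in\mathbb{R}$ and suppose $Q_\alpha$ satisfies assumption (H). Fix $N\ge1$, $n\ge1$, $1\le m\le n$, $x\in\mathsf{X}$ and $\delta\in(0,1)$. Run the particle system with $Q=Q_\alpha$ (and arbitrary initial $\mu$) up to time $2n$ and, conditionally on $\mathcal{F}_{2n}$, let $(\check X_p;p=0,\dots,m)$ be a non-homogeneous Markov chain with $\check X_0=x$ and $\check X_p\sim P^N_{(n+p,2n)}(\check X_{p-1},\cdot)$ for $p\ge1$. Writing $\check{\mathbb{E}}_N$ for expectation under the joint law of the particle system and $(\check X_p)$, \[ \check{\mathbb{E}}_N\left[\mathbb{I}\Big[\sum_{p=1}^mU(\check X_p)>m\delta\Big]\prod_{p=0}^{m-1}\frac{\lambda^N_{n+p}}{G_\alpha(\check X_p)}\cdot\frac{h^N_{n,2n}(\check X_0)}{h^N_{n+m,2n}(\check X_m)}\right]=\pi_m(\delta), \] where $\pi_m(\delta):=\mathbb{P}_x\left(\sum_{p=1}^mU(X_p)>m\delta\right)$ for a Markov chain $(X_p)$ with transition kernel $M$ started at $X_0=x$.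
   Context: Setting: $(\mathsf{X},\mathcal{B})$ is a measurable space with countably generated $\sigma$-algebra; $\mathcal{P}$ the probability measures. For a measure $\mu$, kernel $K$, function $\varphi$: $\mu(\varphi)=\int\varphi\,d\mu$, $K(\varphi)(x)=\int K(x,dy)\varphi(y)$, $\mu K(\cdot)=\int\mu(dx)K(x,\cdot)$; $1$ the constant function one. $M$ is a Markov kernel, $U:\mathsf{X}\to[-1,1]$ measurable, $G_\alpha(x):=e^{\alpha U(x)}$ and $Q_\alpha(x,dy):=G_\alpha(x)M(x,dy)$. Assumption (H) for a kernel $Q$: there is a probability measure $\nu$ such that for all $x$, $Q(x,\cdot)$ is equivalent to $\nu$ with density $q(x,x')$ satisfying $\epsilon^-\le q\le\epsilon^+$ for constants $0<\epsilon^-,\epsilon^+<\infty$. With $Q=Q_\alpha$ and $G=G_\alpha$: for $\eta\in\mathcal{P}$, $\Phi(\eta):=\eta Q/\eta Q(1)$. Particle system: fix $N\ge1$, $\mu\in\mathcal{P}$; $\zeta_0^1,\dots,\zeta_0^N$ i.i.d. $\mu$; for $k\ge1$, conditionally on the past, the $\zeta_k^i$ are i.i.d. with law $\Phi(\eta^N_{k-1})$, where $\eta_k^N:=\frac1N\sum_{i=1}^N\delta_{\zeta_k^i}$; $\mathcal{F}_k:=\sigma(\zeta_0,\dots,\zeta_k)$. Define $\lambda_k^N:=\eta_k^N(G)$, $Q_k^N(x,dx'):=\frac{dQ(x,\cdot)}{d\Phi(\eta_{k-1}^N)}(x')\,\eta_k^N(dx')$ for $k\ge1$, $Q^N_{k,k}:=Id$,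 $Q^N_{p,k}:=Q^N_{p+1}\cdots Q^N_k$ for $p<k$, $h^N_{k,k}:=1$, $h_{p,k}^N(x):=\frac{Q^N_{p,k}(1)(x)}{\eta^N_pQ^N_{p,k}(1)}$ for $0\le p<k$, and for $1\le p\le k$ the random Markov kernel $P^N_{(p,k)}(x,dx'):=\frac{Q^N_p(x,dx')h^N_{p,k}(x')}{\lambda^N_{p-1}h^N_{p-1,k}(x)}$. *)

theory Defs
  imports "HOL-Probability.Probability"
begin

definition countably_generated_space :: "'a measure \<Rightarrow> bool" where
  "countably_generated_space S \<longleftrightarrow>
     (\<exists>C. countable C \<and> C \<subseteq> Pow (space S) \<and> sets S = sigma_sets (space S) C)"

text \<open>Q(x,dy) = G(x) M(x,dy); assumption (H): Q(x,.) has density q(x,.) w.r.t. a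
  probability measure nu, with eps_minus \<le> q \<le> eps_plus. The density is taken
  jointly measurable (a version which exists since sets S is countably generated).\<close>
definition assumption_H ::
  "'a measure \<Rightarrow> ('a \<Rightarrow> 'a measure) \<Rightarrow> ('a \<Rightarrow> real) \<Rightarrow> 'a measure \<Rightarrow> ('a \<Rightarrow> 'a \<Rightarrow> real) \<Rightarrow> bool" where
  "assumption_H S M G \<nu> q \<longleftrightarrow>
     prob_space \<nu> \<and> sets \<nu> = sets S \<and>
     (\<lambda>(x, y). q x y) \<in> borel_measurable (S \<Otimes>\<^sub>M S) \<and>
     (\<exists>em ep. 0 < em \<and> 0 < ep \<and> (\<forall>x\<in>space S. \<forall>y\<in>space S. em \<le> q x y \<and> q x y \<le> ep)) \<and>
     (\<forall>x\<in>space S. \<forall>A\<in>sets S. G x * measure (M x) A = (\<integral>y\<in>A. q x y \<partial>\<nu>))"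

text \<open>A configuration of N particles is z :: nat => 'a (particles z 0, ..., z (N-1)).\<close>
definition eta :: "nat \<Rightarrow> (nat \<Rightarrow> 'a) \<Rightarrow> ('a \<Rightarrow> real) \<Rightarrow> real" where
  "eta N z f = (\<Sum>i<N. f (z i)) / real N"

definition Phi :: "'a measure \<Rightarrow> ('a \<Rightarrow> 'a measure) \<Rightarrow> ('a \<Rightarrow> real) \<Rightarrow> nat \<Rightarrow> (nat \<Rightarrow> 'a) \<Rightarrow> 'a measure" where
  "Phi S M G N z = measure_of (space S) (sets S)
     (\<lambda>A. ennreal (eta N z (\<lambda>y. G y * measure (M y) A) / eta N z G))"

text \<open>Paths of the particle system: w :: nat => nat => 'a, w k i = zeta_k^i,
  with law on PiM {..k} (\<lambda>_. PiM {..<N} (\<lambda>_. S)).\<close>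
fun particle_law :: "'a measure \<Rightarrow> 'a measure \<Rightarrow> ('a \<Rightarrow> 'a measure) \<Rightarrow> ('a \<Rightarrow> real) \<Rightarrow> nat \<Rightarrow> nat
     \<Rightarrow> (nat \<Rightarrow> nat \<Rightarrow> 'a) measure" where
  "particle_law S \<mu> M G N 0 =
     distr (PiM {..<N} (\<lambda>_. \<mu>)) (PiM {..0} (\<lambda>_. PiM {..<N} (\<lambda>_. S))) (\<lambda>z. \<lambda>k\<in>{..0}. z)"
| "particle_law S \<mu> M G N (Suc k) =
     bind (particle_law S \<mu> M G N k) (\<lambda>w.
       distr (PiM {..<N} (\<lambda>_. Phi S M G N (w k))) (PiM {..Suc k} (\<lambda>_. PiM {..<N} (\<lambda>_. S)))
         (\<lambda>z. \<lambda>i\<in>{..Suc k}. if i = Suc k then z else w i))"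

definition lam :: "nat \<Rightarrow> ('a \<Rightarrow> real) \<Rightarrow> (nat \<Rightarrow> nat \<Rightarrow> 'a) \<Rightarrow> nat \<Rightarrow> real" where
  "lam N G w k = eta N (w k) G"

text \<open>Version of dQ(x,.)/dPhi(eta_{k-1}^N)(x') obtained from the density q of (H):
  q(x,x') eta_{k-1}(G) / eta_{k-1}(q(.,x')).\<close>
definition dens :: "nat \<Rightarrow> ('a \<Rightarrow> real) \<Rightarrow> ('a \<Rightarrow> 'a \<Rightarrow> real) \<Rightarrow> (nat \<Rightarrow> nat \<Rightarrow> 'a) \<Rightarrow> nat \<Rightarrow> 'a \<Rightarrow> 'a \<Rightarrow> real" where
  "dens N G q w k x x' = q x x' * eta N (w (k - 1)) G / eta N (w (k - 1)) (\<lambda>y. q y x')"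

definition Qop :: "nat \<Rightarrow> ('a \<Rightarrow> real) \<Rightarrow> ('a \<Rightarrow> 'a \<Rightarrow> real) \<Rightarrow> (nat \<Rightarrow> nat \<Rightarrow> 'a) \<Rightarrow> nat
     \<Rightarrow> ('a \<Rightarrow> real) \<Rightarrow> 'a \<Rightarrow> real" where
  "Qop N G q w k f x = eta N (w k) (\<lambda>x'. dens N G q w k x x' * f x')"

text \<open>Qcomp ... k d = Q_{k-d,k}^N = Q_{k-d+1} ... Q_k (identity for d = 0).\<close>
primrec Qcomp :: "nat \<Rightarrow> ('a \<Rightarrow> real) \<Rightarrow> ('a \<Rightarrow> 'a \<Rightarrow> real) \<Rightarrow> (nat \<Rightarrow> nat \<Rightarrow> 'a) \<Rightarrow> nat \<Rightarrow> nat
     \<Rightarrow> ('a \<Rightarrow> real) \<Rightarrow> 'a \<Rightarrow> real" where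
  "Qcomp N G q w k 0 f = f"
| "Qcomp N G q w k (Suc d) f = Qop N G q w (k - d) (Qcomp N G q w k d f)"

definition Qpk :: "nat \<Rightarrow> ('a \<Rightarrow> real) \<Rightarrow> ('a \<Rightarrow> 'a \<Rightarrow> real) \<Rightarrow> (nat \<Rightarrow> nat \<Rightarrow> 'a) \<Rightarrow> nat \<Rightarrow> nat
     \<Rightarrow> ('a \<Rightarrow> real) \<Rightarrow> 'a \<Rightarrow> real" where
  "Qpk N G q w p k = Qcomp N G q w k (k - p)"

definition hpk :: "nat \<Rightarrow> ('a \<Rightarrow> real) \<Rightarrow> ('a \<Rightarrow> 'a \<Rightarrow> real) \<Rightarrow> (nat \<Rightarrow> nat \<Rightarrow> 'a) \<Rightarrow> nat \<Rightarrow> nat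
     \<Rightarrow> 'a \<Rightarrow> real" where
  "hpk N G q w p k x =
     (if p = k then 1
      else Qpk N G q w p k (\<lambda>_. 1) x / eta N (w p) (Qpk N G q w p k (\<lambda>_. 1)))"

text \<open>P_{(p,k)}^N(x,dx') = Q_p^N(x,dx') h_{p,k}(x') / (lambda_{p-1} h_{p-1,k}(x)); since
  Q_p^N(x,.) is carried by the particles zeta_p^j, this is the discrete law putting mass
  (1/N) dens(x,zeta_p^j) h_{p,k}(zeta_p^j) / (lambda_{p-1} h_{p-1,k}(x)) on zeta_p^j.\<close>
definition Pker :: "nat \<Rightarrow> ('a \<Rightarrow> real) \<Rightarrow> ('a \<Rightarrow> 'a \<Rightarrow> real) \<Rightarrow> (nat \<Rightarrow> nat \<Rightarrow> 'a) \<Rightarrow> nat \<Rightarrow> nat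
     \<Rightarrow> 'a \<Rightarrow> 'a pmf" where
  "Pker N G q w p k x = map_pmf (w p) (embed_pmf (\<lambda>j. if j < N then
       dens N G q w p x (w p j) * hpk N G q w p k (w p j)
         / (real N * lam N G w (p - 1) * hpk N G q w (p - 1) k x)
     else 0))"

primrec check_chain :: "nat \<Rightarrow> ('a \<Rightarrow> real) \<Rightarrow> ('a \<Rightarrow> 'a \<Rightarrow> real) \<Rightarrow> (nat \<Rightarrow> nat \<Rightarrow> 'a) \<Rightarrow> nat
     \<Rightarrow> 'a \<Rightarrow> nat \<Rightarrow> (nat \<Rightarrow> 'a) pmf" where
  "check_chain N G q w n x 0 = return_pmf (\<lambda>_. x)"
| "check_chain N G q w n x (Suc p) =
     bind_pmf (check_chain N G q w n x p)
       (\<lambda>xs. map_pmf (\<lambda>y. xs(Suc p := y)) (Pker N G q w (n + Suc p) (2 * n) (xs p)))"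

fun markov_path :: "'a measure \<Rightarrow> ('a \<Rightarrow> 'a measure) \<Rightarrow> 'a \<Rightarrow> nat \<Rightarrow> (nat \<Rightarrow> 'a) measure" where
  "markov_path S M x 0 = return (PiM {..0} (\<lambda>_. S)) (\<lambda>i\<in>{..0}. x)"
| "markov_path S M x (Suc k) =
     bind (markov_path S M x k) (\<lambda>w.
       distr (M (w k)) (PiM {..Suc k} (\<lambda>_. S)) (\<lambda>y. \<lambda>i\<in>{..Suc k}. if i = Suc k then y else w i))"

definition pi_m :: "'a measure \<Rightarrow> ('a \<Rightarrow> 'a measure) \<Rightarrow> ('a \<Rightarrow> real) \<Rightarrow> 'a \<Rightarrow> nat \<Rightarrow> real \<Rightarrow> real" where
  "pi_m S M U x m \<delta> = measure (markov_path S M x m)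
     {w \<in> space (markov_path S M x m). (\<Sum>p=1..m. U (w p)) > real m * \<delta>}"

end

theory Submission
  imports Defs
begin

locale setting =
  fixes S :: "'a measure" and M :: "'a \<Rightarrow> 'a measure" and U :: "'a \<Rightarrow> real"
    and \<alpha> :: real and \<nu> :: "'a measure" and q :: "'a \<Rightarrow> 'a \<Rightarrow> real" and N :: nat
  assumes Mk: "M \<in> S \<rightarrow>\<^sub>M prob_algebra S"
    and Umeas[measurable]: "U \<in> borel_measurable S" and Ub: "\<forall>y\<in>space S. \<bar>U y\<bar> \<le> 1"
    and H: "assumption_H S M (\<lambda>y. exp (\<alpha> * U y)) \<nu> q"
    and N: "N \<ge> 1"
    and ne: "space S \<noteq> {}"
begin

abbreviation G where "G \<equiv> \<lambda>y. exp (\<alpha> * U y)"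

lemma nu_prob: "prob_space \<nu>" and sets_nu: "sets \<nu> = sets S"
  and q_meas: "(\<lambda>(x, y). q x y) \<in> borel_measurable (S \<Otimes>\<^sub>M S)"
  and qbounds: "\<exists>em ep. 0 < em \<and> 0 < ep \<and> (\<forall>x\<in>space S. \<forall>y\<in>space S. em \<le> q x y \<and> q x y \<le> ep)"
  and dens_rel: "\<And>x A. x \<in> space S \<Longrightarrow> A \<in> sets S \<Longrightarrow> G x * measure (M x) A = (\<integral>y\<in>A. q x y \<partial>\<nu>)"
  using H unfolding assumption_H_def by auto

lemma q_pos: "x \<in> space S \<Longrightarrow> y \<in> space S \<Longrightarrow> 0 < q x y"
  using qbounds by (meson order_less_le_trans)

lemma space_nu: "space \<nu> = space S"
  using sets_nu by (rule sets_eq_imp_space_eq)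

lemma q_meas2[measurable]: "f \<in> X \<rightarrow>\<^sub>M S \<Longrightarrow> g \<in> X \<rightarrow>\<^sub>M S \<Longrightarrow> (\<lambda>w. q (f w) (g w)) \<in> borel_measurable X"
  using measurable_compose[OF measurable_Pair q_meas] by simp

lemma q_meas_nu[measurable]: "y \<in> space S \<Longrightarrow> q y \<in> borel_measurable \<nu>"
  by (subst measurable_cong_sets[OF sets_nu refl]) (rule q_meas2, auto)

lemma M_prob: "y \<in> space S \<Longrightarrow> prob_space (M y)" and sets_M: "y \<in> space S \<Longrightarrow> sets (M y) = sets S"
  using measurable_space[OF Mk] by (auto simp: space_prob_algebra)

lemma space_M: "y \<in> space S \<Longrightarrow> space (M y) = space S"
  using sets_M by (rule sets_eq_imp_space_eq)

lemma G_pos: "G y > 0" by simp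

lemma integrable_nu_bounded:
  fixes B :: real
  assumes "f \<in> borel_measurable \<nu>" "\<And>z. z \<in> space S \<Longrightarrow> \<bar>f z\<bar> \<le> B"
  shows "integrable \<nu> f"
proof -
  interpret prob_space \<nu> by (rule nu_prob)
  show ?thesis
    by (rule integrable_const_bound[where B=B]) (use assms space_nu in auto)
qed

lemma q_integrable: fixes B :: real shows "y \<in> space S \<Longrightarrow> g \<in> borel_measurable \<nu> \<Longrightarrow> (\<And>z. z \<in> space S \<Longrightarrow> \<bar>g z\<bar> \<le> B) \<Longrightarrow>
   integrable \<nu> (\<lambda>z. q y z * g z)"
proof -
  assume y: "y \<in> space S" and g: "g \<in> borel_measurable \<nu>" and gb: "\<And>z. z \<in> space S \<Longrightarrow> \<bar>g z\<bar> \<le> B"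
  obtain em ep where e: "0 < em" "0 < ep" "\<forall>x\<in>space S. \<forall>y\<in>space S. em \<le> q x y \<and> q x y \<le> ep"
    using qbounds by blast
  show ?thesis
  proof (rule integrable_nu_bounded[where B="ep * B"])
    show "(\<lambda>z. q y z * g z) \<in> borel_measurable \<nu>" using y g by measurable
    fix z assume z: "z \<in> space S"
    have qyz: "em \<le> q y z \<and> q y z \<le> ep" using e(3) y z by blast
    have "\<bar>q y z * g z\<bar> = \<bar>q y z\<bar> * \<bar>g z\<bar>" by (simp add: abs_mult)
    also have "\<dots> \<le> ep * B"
      using e qyz gb[OF z] by (intro mult_mono) auto
    finally show "\<bar>q y z * g z\<bar> \<le> ep * B" .
  qed
qed

lemma M_density:
  assumes y: "y \<in> space S"
  shows "M y = density \<nu> (\<lambda>z. ennreal (q y z / G y))"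
proof (rule measure_eqI)
  show "sets (M y) = sets (density \<nu> (\<lambda>z. ennreal (q y z / G y)))"
    using sets_M[OF y] sets_nu by simp
next
  fix A assume A: "A \<in> sets (M y)"
  then have AS: "A \<in> sets S" using sets_M[OF y] by simp
  have An: "A \<in> sets \<nu>" using AS sets_nu by simp
  obtain em ep where e: "0 < em" "0 < ep" "\<forall>x\<in>space S. \<forall>y\<in>space S. em \<le> q x y \<and> q x y \<le> ep"
    using qbounds by blast
  have int: "integrable \<nu> (\<lambda>z. q y z * (indicator A z / G y))"
    by (rule q_integrable[OF y, where B="1 / G y"]) (use An in \<open>auto simp: indicator_def\<close>)
  have "emeasure (density \<nu> (\<lambda>z. ennreal (q y z / G y))) A =
      (\<integral>\<^sup>+ z. ennreal (q y z / G y) * indicator A z \<partial>\<nu>)"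
    using y An by (subst emeasure_density) auto
  also have "\<dots> = (\<integral>\<^sup>+ z. ennreal (q y z * (indicator A z / G y)) \<partial>\<nu>)"
    by (intro nn_integral_cong) (auto simp: indicator_def)
  also have "\<dots> = ennreal (\<integral> z. q y z * (indicator A z / G y) \<partial>\<nu>)"
    using e y by (intro nn_integral_eq_integral int AE_I2) (auto simp: space_nu indicator_def intro!: divide_nonneg_pos less_imp_le[OF q_pos])
  also have "(\<integral> z. q y z * (indicator A z / G y) \<partial>\<nu>) = (\<integral>z\<in>A. q y z \<partial>\<nu>) / G y"
    by (simp add: set_lebesgue_integral_def mult.commute)
  also have "\<dots> = measure (M y) A"
    using dens_rel[OF y AS] by (simp add: field_simps)
  also have "ennreal (measure (M y) A) = emeasure (M y) A"
    using finite_measure.emeasure_eq_measure[OF prob_space.finite_measure[OF M_prob[OF y]]] by simp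
  finally show "emeasure (M y) A = emeasure (density \<nu> (\<lambda>z. ennreal (q y z / G y))) A" ..
qed

lemma integral_M:
  assumes y: "y \<in> space S" and g: "g \<in> borel_measurable S"
  shows "(\<integral>z. g z \<partial>M y) = (\<integral>z. q y z * g z \<partial>\<nu>) / G y"
proof -
  obtain em ep where e: "0 < em" "0 < ep" "\<forall>x\<in>space S. \<forall>y\<in>space S. em \<le> q x y \<and> q x y \<le> ep"
    using qbounds by blast
  have gn: "g \<in> borel_measurable \<nu>" using g sets_nu by (simp cong: measurable_cong_sets)
  have "(\<integral>z. g z \<partial>M y) = (\<integral>z. (q y z / G y) *\<^sub>R g z \<partial>\<nu>)"
    unfolding M_density[OF y]
    using e y gn by (intro integral_density) (auto simp: space_nu intro!: AE_I2 divide_nonneg_pos less_imp_le[OF q_pos])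
  also have "\<dots> = (\<integral>z. (q y z * g z) / G y \<partial>\<nu>)"
    by (intro Bochner_Integration.integral_cong) auto
  also have "\<dots> = (\<integral>z. q y z * g z \<partial>\<nu>) / G y"
    by (rule integral_divide_zero)
  finally show ?thesis .
qed

end


lemma integral_measurable_subprob_algebra2:
  fixes f :: "_ \<Rightarrow> _ \<Rightarrow> real"
  assumes f[measurable]: "(\<lambda>(x, y). f x y) \<in> borel_measurable (M \<Otimes>\<^sub>M N)"
  assumes L[measurable]: "L \<in> measurable M (subprob_algebra N)"
  shows "(\<lambda>x. integral\<^sup>L (L x) (f x)) \<in> borel_measurable M"
proof -
  note integral_measurable_subprob_algebra[measurable]
  note measurable_distr2[measurable]
  have "(\<lambda>x. integral\<^sup>L (distr (L x) (M \<Otimes>\<^sub>M N) (\<lambda>y. (x, y))) (\<lambda>(x, y). f x y)) \<in> borel_measurable M"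
    by measurable
  then show ?thesis
    by (rule measurable_cong[THEN iffD1, rotated])
       (simp add: integral_distr)
qed

lemma ext_meas:
  "(\<lambda>(w, y). (\<lambda>i\<in>{..Suc k}. if i = Suc k then y else w i)) \<in> (PiM {..k} (\<lambda>_. X) \<Otimes>\<^sub>M X) \<rightarrow>\<^sub>M PiM {..Suc k} (\<lambda>_. X)"
proof -
  have "(\<lambda>p. \<lambda>i\<in>{..Suc k}. (if i = Suc k then snd p else fst p i)) \<in> (PiM {..k} (\<lambda>_. X) \<Otimes>\<^sub>M X) \<rightarrow>\<^sub>M PiM {..Suc k} (\<lambda>_. X)"
  proof (rule measurable_restrict)
    fix i assume i: "i \<in> {..Suc k}"
    show "(\<lambda>p. if i = Suc k then snd p else fst p i) \<in> (PiM {..k} (\<lambda>_. X) \<Otimes>\<^sub>M X) \<rightarrow>\<^sub>M X"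
    proof (cases "i = Suc k")
      case False
      then have "i \<in> {..k}" using i by auto
      then show ?thesis using False by simp
    qed simp
  qed
  then show ?thesis by (simp add: case_prod_beta')
qed

context setting
begin

primrec Hf :: "real \<Rightarrow> nat \<Rightarrow> 'a \<Rightarrow> real \<Rightarrow> real" where
  "Hf t 0 y s = (if s > t then 1 else 0)"
| "Hf t (Suc r) y s = (\<integral>z. Hf t r z (s + U z) \<partial>M y)"

lemma Hf_props: "(\<lambda>(y, s). Hf t r y s) \<in> borel_measurable (S \<Otimes>\<^sub>M borel) \<and>
   (\<forall>y\<in>space S. \<forall>s. 0 \<le> Hf t r y s \<and> Hf t r y s \<le> 1)"
proof (induction r)
  case 0
  show ?case by (auto simp: case_prod_beta')
next
  case (Suc r)
  have m[measurable]: "(\<lambda>(y, s). Hf t r y s) \<in> borel_measurable (S \<Otimes>\<^sub>M borel)" using Suc by blast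
  have b: "\<And>y s. y \<in> space S \<Longrightarrow> 0 \<le> Hf t r y s \<and> Hf t r y s \<le> 1" using Suc by blast
  have Mk2[measurable]: "(\<lambda>p. M (fst p)) \<in> (S \<Otimes>\<^sub>M borel) \<rightarrow>\<^sub>M subprob_algebra S"
    using measurable_compose[OF measurable_fst measurable_prob_algebraD[OF Mk]] .
  have "(\<lambda>p. \<integral>z. Hf t r z (snd p + U z) \<partial>M (fst p)) \<in> borel_measurable (S \<Otimes>\<^sub>M borel)"
    by (rule integral_measurable_subprob_algebra2[OF _ Mk2]) measurable
  moreover
  have "0 \<le> Hf t (Suc r) y s \<and> Hf t (Suc r) y s \<le> 1" if y: "y \<in> space S" for y s
  proof -
    interpret prob_space "M y" by (rule M_prob[OF y])
    have int: "integrable (M y) (\<lambda>z. Hf t r z (s + U z))"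
      by (rule integrable_const_bound[where B=1]) (use b space_M[OF y] sets_M[OF y] in \<open>auto cong: measurable_cong_sets\<close>)
    have "0 \<le> (\<integral>z. Hf t r z (s + U z) \<partial>M y)"
      by (rule integral_nonneg_AE) (use b space_M[OF y] in auto)
    moreover have "(\<integral>z. Hf t r z (s + U z) \<partial>M y) \<le> (\<integral>z. 1 \<partial>M y)"
      by (rule integral_mono_AE) (use b space_M[OF y] int in auto)
    ultimately show ?thesis by (simp add: prob_space)
  qed
  ultimately show ?case by (simp add: case_prod_beta')
qed

lemma Hf_meas[measurable]: "(\<lambda>(y, s). Hf t r y s) \<in> borel_measurable (S \<Otimes>\<^sub>M borel)"
  using Hf_props by blast

lemma Hf_meas2[measurable]: "f \<in> X \<rightarrow>\<^sub>M S \<Longrightarrow> g \<in> borel_measurable X \<Longrightarrow> (\<lambda>w. Hf t r (f w) (g w)) \<in> borel_measurable X"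
  using measurable_compose[OF measurable_Pair Hf_meas, of f X g] by simp

lemma Hf_bounds: "y \<in> space S \<Longrightarrow> 0 \<le> Hf t r y s" "y \<in> space S \<Longrightarrow> Hf t r y s \<le> 1"
  using Hf_props by blast+

end


context setting
begin

lemma KM_meas: "(\<lambda>w. distr (M (w k)) (PiM {..Suc k} (\<lambda>_. S)) (\<lambda>y. \<lambda>i\<in>{..Suc k}. if i = Suc k then y else w i))
   \<in> PiM {..k} (\<lambda>_. S) \<rightarrow>\<^sub>M prob_algebra (PiM {..Suc k} (\<lambda>_. S))"
proof (rule measurable_distr_prob_space2)
  show "(\<lambda>w. M (w k)) \<in> PiM {..k} (\<lambda>_. S) \<rightarrow>\<^sub>M prob_algebra S"
    using measurable_compose[OF measurable_component_singleton[of k "{..k}" "\<lambda>_. S"] Mk] by simp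
  show "(\<lambda>(x, y). \<lambda>i\<in>{..Suc k}. if i = Suc k then y else x i) \<in> PiM {..k} (\<lambda>_. S) \<Otimes>\<^sub>M S \<rightarrow>\<^sub>M PiM {..Suc k} (\<lambda>_. S)"
    by (rule ext_meas)
qed

lemma mp_facts: assumes x: "x \<in> space S"
  shows "sets (markov_path S M x k) = sets (PiM {..k} (\<lambda>_. S)) \<and> prob_space (markov_path S M x k)"
proof (induction k)
  case 0
  have "(\<lambda>i\<in>{..0::nat}. x) \<in> space (PiM {..0} (\<lambda>_. S))" using x by (simp add: space_PiM)
  then show ?case by (auto intro!: prob_space_return)
next
  case (Suc k)
  have A: "markov_path S M x k \<in> space (prob_algebra (PiM {..k} (\<lambda>_. S)))"
    using Suc by (simp add: space_prob_algebra)
  have B: "(\<lambda>w. distr (M (w k)) (PiM {..Suc k} (\<lambda>_. S)) (\<lambda>y. \<lambda>i\<in>{..Suc k}. if i = Suc k then y else w i))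
   \<in> markov_path S M x k \<rightarrow>\<^sub>M prob_algebra (PiM {..Suc k} (\<lambda>_. S))"
    using KM_meas Suc by (simp cong: measurable_cong_sets)
  note B = KM_meas[of k]
  show ?case using sets_bind'[OF A B] prob_space_bind'[OF A B] by simp
qed

lemma space_mp: "x \<in> space S \<Longrightarrow> space (markov_path S M x k) = space (PiM {..k} (\<lambda>_. S))"
  using mp_facts[of x k] by (metis sets_eq_imp_space_eq)

lemma mp_integral:
  fixes f :: "(nat \<Rightarrow> 'a) \<Rightarrow> real"
  assumes x: "x \<in> space S" and f[measurable]: "f \<in> borel_measurable (PiM {..Suc k} (\<lambda>_. S))"
    and fb: "\<And>w. w \<in> space (PiM {..Suc k} (\<lambda>_. S)) \<Longrightarrow> \<bar>f w\<bar> \<le> B"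
  shows "(\<integral>w. f w \<partial>markov_path S M x (Suc k)) =
    (\<integral>w. (\<integral>y. f (\<lambda>i\<in>{..Suc k}. if i = Suc k then y else w i) \<partial>M (w k)) \<partial>markov_path S M x k)"
proof -
  let ?K = "\<lambda>w. distr (M (w k)) (PiM {..Suc k} (\<lambda>_. S)) (\<lambda>y. \<lambda>i\<in>{..Suc k}. if i = Suc k then y else w i)"
  have B: "?K \<in> markov_path S M x k \<rightarrow>\<^sub>M subprob_algebra (PiM {..Suc k} (\<lambda>_. S))"
    using measurable_prob_algebraD[OF KM_meas] mp_facts[OF x] by (simp cong: measurable_cong_sets)
  interpret P: prob_space "markov_path S M x k" using mp_facts[OF x] by blast
  have "(\<integral>w. f w \<partial>markov_path S M x (Suc k)) = (\<integral>w. integral\<^sup>L (?K w) f \<partial>markov_path S M x k)"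
    unfolding markov_path.simps
  proof (rule integral_bind[OF f fb B])
    show "finite_measure (markov_path S M x k)" by (rule P.finite_measure)
    show "AE w in markov_path S M x k. emeasure (?K w) (space (?K w)) \<le> ennreal 1"
    proof (rule AE_I2)
      fix w assume w: "w \<in> space (markov_path S M x k)"
      have "?K w \<in> space (subprob_algebra (PiM {..Suc k} (\<lambda>_. S)))" using measurable_space[OF B w] .
      then show "emeasure (?K w) (space (?K w)) \<le> ennreal 1"
        by (auto simp: space_subprob_algebra dest: subprob_space.subprob_emeasure_le_1)
    qed
  qed
  also have "\<dots> = (\<integral>w. (\<integral>y. f (\<lambda>i\<in>{..Suc k}. if i = Suc k then y else w i) \<partial>M (w k)) \<partial>markov_path S M x k)"
  proof (rule Bochner_Integration.integral_cong[OF refl])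
    fix w assume w: "w \<in> space (markov_path S M x k)"
    then have wk: "w k \<in> space S" using space_mp[OF x] by (auto simp: space_PiM)
    have m: "(\<lambda>y. \<lambda>i\<in>{..Suc k}. if i = Suc k then y else w i) \<in> M (w k) \<rightarrow>\<^sub>M PiM {..Suc k} (\<lambda>_. S)"
      using measurable_Pair2[OF ext_meas[of k S], of w] w space_mp[OF x] sets_M[OF wk]
      by (simp cong: measurable_cong_sets)
    show "integral\<^sup>L (?K w) f = (\<integral>y. f (\<lambda>i\<in>{..Suc k}. if i = Suc k then y else w i) \<partial>M (w k))"
      by (rule integral_distr[OF m f])
  qed
  finally show ?thesis .
qed

lemma mp_H:
  assumes x: "x \<in> space S"
  shows "k \<le> m \<Longrightarrow> (\<integral>w. Hf t (m - k) (w k) (\<Sum>p=1..k. U (w p)) \<partial>markov_path S M x k) = Hf t m x 0"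
proof (induction k)
  case 0
  have "(\<lambda>i\<in>{..0::nat}. x) \<in> space (PiM {..0} (\<lambda>_. S))" using x by (simp add: space_PiM)
  moreover have "(\<lambda>w. Hf t m (w 0) 0) \<in> borel_measurable (PiM {..0::nat} (\<lambda>_. S))"
  proof -
    have c: "(\<lambda>w. w 0) \<in> PiM {..0::nat} (\<lambda>_. S) \<rightarrow>\<^sub>M S"
      using measurable_component_singleton[of 0 "{..0}" "\<lambda>_. S"] by simp
    show ?thesis using Hf_meas2[OF c, of "\<lambda>_. 0"] by simp
  qed
  ultimately show ?case by (simp add: integral_return)
next
  case (Suc k)
  then have km: "k \<le> m" and IH: "(\<integral>w. Hf t (m - k) (w k) (\<Sum>p=1..k. U (w p)) \<partial>markov_path S M x k) = Hf t m x 0" by auto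
  have mk: "m - k = Suc (m - Suc k)" using Suc by simp
  have "(\<integral>w. Hf t (m - Suc k) (w (Suc k)) (\<Sum>p=1..Suc k. U (w p)) \<partial>markov_path S M x (Suc k)) =
    (\<integral>w. (\<integral>y. Hf t (m - Suc k) ((\<lambda>i\<in>{..Suc k}. if i = Suc k then y else w i) (Suc k))
          (\<Sum>p=1..Suc k. U ((\<lambda>i\<in>{..Suc k}. if i = Suc k then y else w i) p)) \<partial>M (w k)) \<partial>markov_path S M x k)"
  proof (rule mp_integral[OF x, where B=1])
    show "(\<lambda>w. Hf t (m - Suc k) (w (Suc k)) (\<Sum>p = 1..Suc k. U (w p))) \<in> borel_measurable (PiM {..Suc k} (\<lambda>_. S))"
      by measurable
    fix w assume "w \<in> space (PiM {..Suc k} (\<lambda>_. S))"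
    then have "w (Suc k) \<in> space S" by (auto simp: space_PiM)
    then show "\<bar>Hf t (m - Suc k) (w (Suc k)) (\<Sum>p = 1..Suc k. U (w p))\<bar> \<le> 1"
      using Hf_bounds by (simp add: abs_le_iff)
  qed
  also have "\<dots> = (\<integral>w. Hf t (m - k) (w k) (\<Sum>p=1..k. U (w p)) \<partial>markov_path S M x k)"
  proof (rule Bochner_Integration.integral_cong[OF refl])
    fix w assume w: "w \<in> space (markov_path S M x k)"
    have "(\<integral>y. Hf t (m - Suc k) ((\<lambda>i\<in>{..Suc k}. if i = Suc k then y else w i) (Suc k))
          (\<Sum>p=1..Suc k. U ((\<lambda>i\<in>{..Suc k}. if i = Suc k then y else w i) p)) \<partial>M (w k)) =
        (\<integral>y. Hf t (m - Suc k) y ((\<Sum>p=1..k. U (w p)) + U y) \<partial>M (w k))"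
    proof (rule Bochner_Integration.integral_cong[OF refl])
      fix y
      have "(\<Sum>p=1..Suc k. U ((\<lambda>i\<in>{..Suc k}. if i = Suc k then y else w i) p)) =
          (\<Sum>p=1..k. U ((\<lambda>i\<in>{..Suc k}. if i = Suc k then y else w i) p)) + U y"
        by simp
      also have "(\<Sum>p=1..k. U ((\<lambda>i\<in>{..Suc k}. if i = Suc k then y else w i) p)) = (\<Sum>p=1..k. U (w p))"
        by (intro sum.cong) auto
      finally show "Hf t (m - Suc k) ((\<lambda>i\<in>{..Suc k}. if i = Suc k then y else w i) (Suc k))
          (\<Sum>p=1..Suc k. U ((\<lambda>i\<in>{..Suc k}. if i = Suc k then y else w i) p)) =
          Hf t (m - Suc k) y ((\<Sum>p=1..k. U (w p)) + U y)" by simp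
    qed
    also have "\<dots> = Hf t (m - k) (w k) (\<Sum>p=1..k. U (w p))"
      unfolding mk by simp
    finally show "(\<integral>y. Hf t (m - Suc k) ((\<lambda>i\<in>{..Suc k}. if i = Suc k then y else w i) (Suc k))
          (\<Sum>p=1..Suc k. U ((\<lambda>i\<in>{..Suc k}. if i = Suc k then y else w i) p)) \<partial>M (w k)) =
        Hf t (m - k) (w k) (\<Sum>p=1..k. U (w p))" .
  qed
  finally show ?case using IH by simp
qed

lemma pi_m_Hf:
  assumes x: "x \<in> space S"
  shows "pi_m S M U x m \<delta> = Hf (real m * \<delta>) m x 0"
proof -
  interpret P: prob_space "markov_path S M x m" using mp_facts[OF x] by blast
  let ?A = "{w \<in> space (markov_path S M x m). (\<Sum>p=1..m. U (w p)) > real m * \<delta>}"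
  have sp: "space (markov_path S M x m) = space (PiM {..m} (\<lambda>_. S))" by (rule space_mp[OF x])
  have A: "?A \<in> sets (markov_path S M x m)"
  proof -
    have "{w \<in> space (PiM {..m} (\<lambda>_. S)). (\<Sum>p=1..m. U (w p)) > real m * \<delta>} \<in> sets (PiM {..m} (\<lambda>_. S))"
      by measurable
    then show ?thesis using mp_facts[OF x] sp by simp
  qed
  have "pi_m S M U x m \<delta> = measure (markov_path S M x m) ?A" by (simp add: pi_m_def)
  also have "\<dots> = (\<integral>w. indicator ?A w \<partial>markov_path S M x m)"
    using A by simp
  also have "\<dots> = (\<integral>w. Hf (real m * \<delta>) (m - m) (w m) (\<Sum>p=1..m. U (w p)) \<partial>markov_path S M x m)"
    by (intro Bochner_Integration.integral_cong) (auto simp: indicator_def)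
  also have "\<dots> = Hf (real m * \<delta>) m x 0" by (rule mp_H[OF x]) simp
  finally show ?thesis .
qed

end


lemma eta_pos: "N \<ge> 1 \<Longrightarrow> (\<And>i. i < N \<Longrightarrow> 0 < f (z i)) \<Longrightarrow> 0 < eta N z f"
  unfolding eta_def by (intro divide_pos_pos sum_pos) (auto simp: lessThan_empty_iff)

lemma eta_const[simp]: "N \<ge> 1 \<Longrightarrow> eta N z (\<lambda>_. c) = c"
  unfolding eta_def by simp

lemma PiM_sum_integral:
  fixes c :: "'a \<Rightarrow> real"
  assumes P: "prob_space P" and c: "integrable P c"
  shows "(\<integral>z. (\<Sum>j<N. c (z j)) \<partial>PiM {..<N} (\<lambda>_. P)) = real N * (\<integral>y. c y \<partial>P)"
proof -
  have cm[measurable]: "c \<in> borel_measurable P" using c by auto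
  have d: "distr (PiM {..<N} (\<lambda>_. P)) P (\<lambda>z. z j) = P" if "j < N" for j
    using distr_PiM_component[of "{..<N}" "\<lambda>_. P" j] P that by simp
  have comp: "(\<lambda>z. z j) \<in> PiM {..<N} (\<lambda>_. P) \<rightarrow>\<^sub>M P" if "j < N" for j
    using measurable_component_singleton[of j "{..<N}" "\<lambda>_. P"] that by simp
  have int: "integrable (PiM {..<N} (\<lambda>_. P)) (\<lambda>z. c (z j))" if j: "j < N" for j
    using integrable_distr_eq[OF comp[OF j] cm] d[OF j] c by simp
  have "(\<integral>z. (\<Sum>j<N. c (z j)) \<partial>PiM {..<N} (\<lambda>_. P)) = (\<Sum>j<N. \<integral>z. c (z j) \<partial>PiM {..<N} (\<lambda>_. P))"
    using int by (intro Bochner_Integration.integral_sum) auto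
  also have "\<dots> = (\<Sum>j<N. \<integral>y. c y \<partial>P)"
  proof (rule sum.cong[OF refl])
    fix j assume "j \<in> {..<N}"
    then have j: "j < N" by simp
    show "(\<integral>z. c (z j) \<partial>PiM {..<N} (\<lambda>_. P)) = (\<integral>y. c y \<partial>P)"
      using integral_distr[OF comp[OF j] cm] d[OF j] by simp
  qed
  finally show ?thesis by simp
qed

context setting
begin

definition good :: "(nat \<Rightarrow> 'a) \<Rightarrow> bool" where
  "good z \<longleftrightarrow> (\<forall>i<N. z i \<in> space S)"

lemma good_G_pos: "0 < eta N z G"
  using N by (intro eta_pos) auto

lemma good_q_pos: "good z \<Longrightarrow> y \<in> space S \<Longrightarrow> 0 < eta N z (\<lambda>x. q x y)"
  using N q_pos by (intro eta_pos) (auto simp: good_def)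

abbreviation phidens where "phidens z y' \<equiv> eta N z (\<lambda>x. q x y') / eta N z G"

lemma phidens_meas: assumes z: "good z" shows "(\<lambda>y'. phidens z y') \<in> borel_measurable S"
proof -
  have [measurable]: "(\<lambda>y'. q (z i) y') \<in> borel_measurable S" if "i < N" for i
    using z that by (intro q_meas2) (auto simp: good_def)
  show ?thesis unfolding eta_def by measurable
qed

lemma D_emeasure:
  assumes z: "good z" and A: "A \<in> sets S"
  shows "emeasure (density \<nu> (\<lambda>y'. ennreal (phidens z y'))) A = ennreal (eta N z (\<lambda>y. G y * measure (M y) A) / eta N z G)"
proof -
  let ?D = "density \<nu> (\<lambda>y'. ennreal (phidens z y'))"
  have zS: "\<And>i. i < N \<Longrightarrow> z i \<in> space S" using z by (auto simp: good_def)
    have An: "A \<in> sets \<nu>" using A sets_nu by simp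
    have pm: "(\<lambda>y'. ennreal (phidens z y')) \<in> borel_measurable \<nu>"
      using sets_nu phidens_meas[OF z] by (simp cong: measurable_cong_sets)
    have pos: "0 < real N * eta N z G" using N good_G_pos by simp
    have int: "integrable \<nu> (\<lambda>y'. q (z i) y' * (indicator A y' / (real N * eta N z G)))" if "i < N" for i
      by (rule q_integrable[OF zS[OF that], where B="1 / (real N * eta N z G)"])
        (use An pos in \<open>auto simp: indicator_def\<close>)
    have "emeasure ?D A = (\<integral>\<^sup>+ y'. ennreal (phidens z y') * indicator A y' \<partial>\<nu>)"
      using An by (intro emeasure_density pm) auto
    also have "\<dots> = (\<integral>\<^sup>+ y'. ennreal (\<Sum>i<N. q (z i) y' * (indicator A y' / (real N * eta N z G))) \<partial>\<nu>)"
    proof (rule nn_integral_cong)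
      fix y' assume "y' \<in> space \<nu>"
      have "phidens z y' * indicator A y' = (\<Sum>i<N. q (z i) y' * (indicator A y' / (real N * eta N z G)))"
        unfolding eta_def[of N z "\<lambda>x. q x y'"] by (simp add: sum_distrib_left sum_distrib_right sum_divide_distrib field_simps)
      then show "ennreal (phidens z y') * indicator A y' = ennreal (\<Sum>i<N. q (z i) y' * (indicator A y' / (real N * eta N z G)))"
        by (cases "y' \<in> A") (simp_all add: indicator_def)
    qed
    also have "\<dots> = ennreal (\<integral>y'. (\<Sum>i<N. q (z i) y' * (indicator A y' / (real N * eta N z G))) \<partial>\<nu>)"
    proof (rule nn_integral_eq_integral)
      show "integrable \<nu> (\<lambda>y'. \<Sum>i<N. q (z i) y' * (indicator A y' / (real N * eta N z G)))"
        using int by auto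
      show "AE y' in \<nu>. 0 \<le> (\<Sum>i<N. q (z i) y' * (indicator A y' / (real N * eta N z G)))"
        using zS q_pos good_G_pos
        by (intro AE_I2 sum_nonneg mult_nonneg_nonneg) (auto simp: space_nu less_imp_le indicator_def)
    qed
    also have "(\<integral>y'. (\<Sum>i<N. q (z i) y' * (indicator A y' / (real N * eta N z G))) \<partial>\<nu>) =
        (\<Sum>i<N. (\<integral>y'. q (z i) y' * indicator A y' \<partial>\<nu>) / (real N * eta N z G))"
      using int by (subst Bochner_Integration.integral_sum) (auto simp: times_divide_eq_right[symmetric] integral_divide_zero[symmetric] simp del: times_divide_eq_right intro!: sum.cong)
    also have "\<dots> = (\<Sum>i<N. G (z i) * measure (M (z i)) A / (real N * eta N z G))"
    proof (rule sum.cong[OF refl])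
      fix i assume "i \<in> {..<N}"
      then have i: "i < N" by simp
      have "(\<integral>y'. q (z i) y' * indicator A y' \<partial>\<nu>) = (\<integral>y'\<in>A. q (z i) y' \<partial>\<nu>)"
        by (simp add: set_lebesgue_integral_def mult.commute)
      also have "\<dots> = G (z i) * measure (M (z i)) A" using dens_rel[OF zS[OF i] A] by simp
      finally show "(\<integral>y'. q (z i) y' * indicator A y' \<partial>\<nu>) / (real N * eta N z G) = G (z i) * measure (M (z i)) A / (real N * eta N z G)"
        by simp
    qed
    also have "\<dots> = eta N z (\<lambda>y. G y * measure (M y) A) / eta N z G"
      unfolding eta_def[of N z "\<lambda>y. G y * measure (M y) A"] by (simp add: sum_divide_distrib)
    finally show ?thesis .
qed

lemma Phi_density:
  assumes z: "good z"
  shows "Phi S M G N z = density \<nu> (\<lambda>y'. ennreal (phidens z y'))"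
proof -
  let ?D = "density \<nu> (\<lambda>y'. ennreal (phidens z y'))"
  have sD: "sets ?D = sets S" using sets_nu by simp
  have spD: "space ?D = space S" using space_nu by simp
  have "Phi S M G N z = measure_of (space S) (sets S) (emeasure ?D)"
    unfolding Phi_def
  proof (rule measure_of_eq)
    show "sets S \<subseteq> Pow (space S)" by (rule sets.space_closed)
    fix A assume "A \<in> sigma_sets (space S) (sets S)"
    then have A: "A \<in> sets S" by (simp add: sets.sigma_sets_eq)
    show "ennreal (eta N z (\<lambda>y. G y * measure (M y) A) / eta N z G) = emeasure ?D A"
      using D_emeasure[OF z A] by simp
  qed
  also have "\<dots> = ?D"
    using measure_of_of_measure[of ?D] sD spD by simp
  finally show ?thesis .
qed

lemma Phi_prob: assumes z: "good z" shows "prob_space (Phi S M G N z)"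
proof -
  have m1: "\<forall>y\<in>space S. measure (M y) (space S) = 1"
    using M_prob space_M prob_space.prob_space by metis
  have "eta N z (\<lambda>y. G y * measure (M y) (space S)) = eta N z G"
    unfolding eta_def using z
    by (intro arg_cong[where f="\<lambda>x. x / real N"] sum.cong)
      (use m1 in \<open>auto simp: good_def\<close>)
  then have "emeasure (density \<nu> (\<lambda>y'. ennreal (phidens z y'))) (space S) = 1"
    using D_emeasure[OF z sets.top] good_G_pos[of z] by simp
  then show ?thesis
    unfolding Phi_density[OF z] by (intro prob_spaceI) (simp add: space_nu)
qed

lemma sets_Phi[simp]: "sets (Phi S M G N z) = sets S"
  unfolding Phi_def by (simp add: sets.space_closed)

lemma space_Phi[simp]: "space (Phi S M G N z) = space S"
  unfolding Phi_def by (simp add: sets.space_closed)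

end


context setting
begin

abbreviation Z where "Z \<equiv> PiM {..<N} (\<lambda>_. S)"
abbreviation W where "W k \<equiv> PiM {..k} (\<lambda>_. Z)"

lemma good_space: "z \<in> space Z \<Longrightarrow> good z"
  by (auto simp: good_def space_PiM)

lemma emeasure_Phi: "good z \<Longrightarrow> A \<in> sets S \<Longrightarrow>
  emeasure (Phi S M G N z) A = ennreal (eta N z (\<lambda>y. G y * measure (M y) A) / eta N z G)"
  using Phi_density D_emeasure by simp

lemma measure_M_meas[measurable]: "A \<in> sets S \<Longrightarrow> (\<lambda>y. measure (M y) A) \<in> borel_measurable S"
  using measurable_compose[OF measurable_prob_algebraD[OF Mk] measurable_measure_subprob_algebra] by simp

lemma Phi_kernel:
  assumes f: "f \<in> X \<rightarrow>\<^sub>M Z"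
  shows "(\<lambda>x. Phi S M G N (f x)) \<in> X \<rightarrow>\<^sub>M prob_algebra S"
proof (rule measurable_prob_algebra_generated[where \<Omega>="space S" and G="sets S"])
  show "sets S = sigma_sets (space S) (sets S)" by (simp add: sets.sigma_sets_eq)
  show "Int_stable (sets S)" by (auto simp: Int_stable_def)
  show "sets S \<subseteq> Pow (space S)" by (rule sets.space_closed)
  fix a assume a: "a \<in> space X"
  have g: "good (f a)" using measurable_space[OF f a] by (rule good_space)
  show "prob_space (Phi S M G N (f a))" by (rule Phi_prob[OF g])
  show "sets (Phi S M G N (f a)) = sets S" by simp
next
  fix A assume A: "A \<in> sets S"
  have c[measurable]: "(\<lambda>x. f x i) \<in> X \<rightarrow>\<^sub>M S" if "i < N" for i
    using measurable_compose[OF f measurable_component_singleton[of i "{..<N}" "\<lambda>_. S"]] that by simp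
  have "(\<lambda>x. ennreal (eta N (f x) (\<lambda>y. G y * measure (M y) A) / eta N (f x) G)) \<in> borel_measurable X"
    unfolding eta_def using A by measurable
  then show "(\<lambda>x. emeasure (Phi S M G N (f x)) A) \<in> borel_measurable X"
    by (rule measurable_cong[THEN iffD1, rotated])
      (use A measurable_space[OF f] good_space emeasure_Phi in auto)
qed

lemma PiPhi_kernel:
  assumes f: "f \<in> X \<rightarrow>\<^sub>M Z"
  shows "(\<lambda>x. PiM {..<N} (\<lambda>_. Phi S M G N (f x))) \<in> X \<rightarrow>\<^sub>M prob_algebra Z"
proof (rule measurable_prob_algebra_generated[where \<Omega>="PiE {..<N} (\<lambda>_. space S)" and G="prod_algebra {..<N} (\<lambda>_. S)"])
  show "sets Z = sigma_sets (PiE {..<N} (\<lambda>_. space S)) (prod_algebra {..<N} (\<lambda>_. S))" by (rule sets_PiM)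
  show "Int_stable (prod_algebra {..<N} (\<lambda>_. S))" by (rule Int_stable_prod_algebra)
  show "prod_algebra {..<N} (\<lambda>_. S) \<subseteq> Pow (PiE {..<N} (\<lambda>_. space S))"
    using prod_algebra_sets_into_space[of "{..<N}" "\<lambda>_. S"] by simp
  fix a assume a: "a \<in> space X"
  have g: "good (f a)" using measurable_space[OF f a] by (rule good_space)
  show "prob_space (PiM {..<N} (\<lambda>_. Phi S M G N (f a)))"
    by (rule prob_space_PiM) (rule Phi_prob[OF g])
  show "sets (PiM {..<N} (\<lambda>_. Phi S M G N (f a))) = sets Z"
    by (rule sets_PiM_cong) auto
next
  fix A assume A: "A \<in> prod_algebra {..<N} (\<lambda>_. S)"
  then obtain E where E: "A = PiE {..<N} E" "E \<in> (\<Pi> i\<in>{..<N}. sets S)"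
    by (auto elim: prod_algebraE_all)
  have K: "(\<lambda>x. Phi S M G N (f x)) \<in> X \<rightarrow>\<^sub>M subprob_algebra S"
    using measurable_prob_algebraD[OF Phi_kernel[OF f]] .
  have "(\<lambda>x. \<Prod>i<N. emeasure (Phi S M G N (f x)) (E i)) \<in> borel_measurable X"
  proof (rule borel_measurable_prod_ennreal)
    fix i assume "i \<in> {..<N}"
    then have "E i \<in> sets S" using E(2) by auto
    then show "(\<lambda>x. emeasure (Phi S M G N (f x)) (E i)) \<in> borel_measurable X"
      by (rule measurable_emeasure_kernel[OF K])
  qed
  then show "(\<lambda>x. emeasure (PiM {..<N} (\<lambda>_. Phi S M G N (f x))) A) \<in> borel_measurable X"
  proof (rule measurable_cong[THEN iffD1, rotated])
    fix x assume x: "x \<in> space X"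
    have g: "good (f x)" using measurable_space[OF f x] by (rule good_space)
    interpret product_sigma_finite "\<lambda>_. Phi S M G N (f x)"
      unfolding product_sigma_finite_def using prob_space_imp_sigma_finite[OF Phi_prob[OF g]] by simp
    show "(\<Prod>i<N. emeasure (Phi S M G N (f x)) (E i)) = emeasure (PiM {..<N} (\<lambda>_. Phi S M G N (f x))) A"
      unfolding E(1) using E(2) by (subst emeasure_PiM) auto
  qed
qed

lemma KP_meas: "(\<lambda>w. distr (PiM {..<N} (\<lambda>_. Phi S M G N (w k))) (W (Suc k)) (\<lambda>z. \<lambda>i\<in>{..Suc k}. if i = Suc k then z else w i))
   \<in> W k \<rightarrow>\<^sub>M prob_algebra (W (Suc k))"
proof (rule measurable_distr_prob_space2)
  show "(\<lambda>w. PiM {..<N} (\<lambda>_. Phi S M G N (w k))) \<in> W k \<rightarrow>\<^sub>M prob_algebra Z"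
    by (rule PiPhi_kernel) (use measurable_component_singleton[of k "{..k}" "\<lambda>_. Z"] in simp)
  show "(\<lambda>(x, y). \<lambda>i\<in>{..Suc k}. if i = Suc k then y else x i) \<in> W k \<Otimes>\<^sub>M Z \<rightarrow>\<^sub>M W (Suc k)"
    by (rule ext_meas)
qed

lemma pl_facts: assumes mu: "prob_space \<mu>" "sets \<mu> = sets S"
  shows "sets (particle_law S \<mu> M G N k) = sets (W k) \<and> prob_space (particle_law S \<mu> M G N k)"
proof (induction k)
  case 0
  have m: "(\<lambda>z. \<lambda>k\<in>{..0::nat}. z) \<in> PiM {..<N} (\<lambda>_. \<mu>) \<rightarrow>\<^sub>M W 0"
  proof (rule measurable_restrict)
    fix i :: nat assume "i \<in> {..0}"
    show "(\<lambda>z. z) \<in> PiM {..<N} (\<lambda>_. \<mu>) \<rightarrow>\<^sub>M Z"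
      by (rule measurable_ident_sets) (rule sets_PiM_cong, use mu in auto)
  qed
  have "prob_space (PiM {..<N} (\<lambda>_. \<mu>))" by (rule prob_space_PiM) (use mu in auto)
  then show ?case using m by (auto intro!: prob_space.prob_space_distr)
next
  case (Suc k)
  have A: "particle_law S \<mu> M G N k \<in> space (prob_algebra (W k))"
    using Suc by (simp add: space_prob_algebra)
  note B = KP_meas[of k]
  show ?case using sets_bind'[OF A B] prob_space_bind'[OF A B] by simp
qed

lemma space_pl: "prob_space \<mu> \<Longrightarrow> sets \<mu> = sets S \<Longrightarrow> space (particle_law S \<mu> M G N k) = space (W k)"
  using pl_facts[of \<mu> k] by (metis sets_eq_imp_space_eq)

lemma pl_integral:
  fixes f :: "(nat \<Rightarrow> nat \<Rightarrow> 'a) \<Rightarrow> real"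
  assumes mu: "prob_space \<mu>" "sets \<mu> = sets S"
    and f[measurable]: "f \<in> borel_measurable (W (Suc k))"
    and fb: "\<And>w. w \<in> space (W (Suc k)) \<Longrightarrow> \<bar>f w\<bar> \<le> B"
  shows "(\<integral>w. f w \<partial>particle_law S \<mu> M G N (Suc k)) =
    (\<integral>w. (\<integral>z. f (\<lambda>i\<in>{..Suc k}. if i = Suc k then z else w i) \<partial>PiM {..<N} (\<lambda>_. Phi S M G N (w k))) \<partial>particle_law S \<mu> M G N k)"
proof -
  let ?K = "\<lambda>w. distr (PiM {..<N} (\<lambda>_. Phi S M G N (w k))) (W (Suc k)) (\<lambda>z. \<lambda>i\<in>{..Suc k}. if i = Suc k then z else w i)"
  have B: "?K \<in> particle_law S \<mu> M G N k \<rightarrow>\<^sub>M subprob_algebra (W (Suc k))"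
    using measurable_prob_algebraD[OF KP_meas] pl_facts[OF mu] by (simp cong: measurable_cong_sets)
  interpret P: prob_space "particle_law S \<mu> M G N k" using pl_facts[OF mu] by blast
  have "(\<integral>w. f w \<partial>particle_law S \<mu> M G N (Suc k)) = (\<integral>w. integral\<^sup>L (?K w) f \<partial>particle_law S \<mu> M G N k)"
    unfolding particle_law.simps
  proof (rule integral_bind[OF f fb B])
    show "finite_measure (particle_law S \<mu> M G N k)" by (rule P.finite_measure)
    show "AE w in particle_law S \<mu> M G N k. emeasure (?K w) (space (?K w)) \<le> ennreal 1"
    proof (rule AE_I2)
      fix w assume w: "w \<in> space (particle_law S \<mu> M G N k)"
      have "?K w \<in> space (subprob_algebra (W (Suc k)))" using measurable_space[OF B w] .
      then show "emeasure (?K w) (space (?K w)) \<le> ennreal 1"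
        by (auto simp: space_subprob_algebra dest: subprob_space.subprob_emeasure_le_1)
    qed
  qed
  also have "\<dots> = (\<integral>w. (\<integral>z. f (\<lambda>i\<in>{..Suc k}. if i = Suc k then z else w i) \<partial>PiM {..<N} (\<lambda>_. Phi S M G N (w k))) \<partial>particle_law S \<mu> M G N k)"
  proof (rule Bochner_Integration.integral_cong[OF refl])
    fix w assume w: "w \<in> space (particle_law S \<mu> M G N k)"
    have m: "(\<lambda>z. \<lambda>i\<in>{..Suc k}. if i = Suc k then z else w i) \<in> PiM {..<N} (\<lambda>_. Phi S M G N (w k)) \<rightarrow>\<^sub>M W (Suc k)"
    proof -
      have "(\<lambda>z. \<lambda>i\<in>{..Suc k}. if i = Suc k then z else w i) \<in> Z \<rightarrow>\<^sub>M W (Suc k)"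
        using measurable_Pair2[OF ext_meas[of k Z], of w] w space_pl[OF mu] by simp
      moreover have "sets (PiM {..<N} (\<lambda>_. Phi S M G N (w k))) = sets Z"
        by (rule sets_PiM_cong) auto
      ultimately show ?thesis by (simp cong: measurable_cong_sets)
    qed
    show "integral\<^sup>L (?K w) f = (\<integral>z. f (\<lambda>i\<in>{..Suc k}. if i = Suc k then z else w i) \<partial>PiM {..<N} (\<lambda>_. Phi S M G N (w k)))"
      by (rule integral_distr[OF m f])
  qed
  finally show ?thesis .
qed

end


lemma eta_le: "N \<ge> 1 \<Longrightarrow> (\<And>i. i < N \<Longrightarrow> f (z i) \<le> c) \<Longrightarrow> eta N z f \<le> c"
proof -
  assume N: "N \<ge> 1" and b: "\<And>i. i < N \<Longrightarrow> f (z i) \<le> c"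
  have "(\<Sum>i<N. f (z i)) \<le> (\<Sum>i<N. c)" by (intro sum_mono) (use b in auto)
  then show ?thesis using N unfolding eta_def by (simp add: divide_le_eq mult.commute)
qed

lemma eta_ge: "N \<ge> 1 \<Longrightarrow> (\<And>i. i < N \<Longrightarrow> c \<le> f (z i)) \<Longrightarrow> c \<le> eta N z f"
proof -
  assume N: "N \<ge> 1" and b: "\<And>i. i < N \<Longrightarrow> c \<le> f (z i)"
  have "(\<Sum>i<N. c) \<le> (\<Sum>i<N. f (z i))" by (intro sum_mono) (use b in auto)
  then show ?thesis using N unfolding eta_def by (simp add: le_divide_eq mult.commute)
qed

context setting
begin

lemma G_le: "y \<in> space S \<Longrightarrow> G y \<le> exp \<bar>\<alpha>\<bar>"
proof -
  assume y: "y \<in> space S"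
  have "\<bar>U y\<bar> \<le> 1" using Ub y by auto
  then have "\<bar>\<alpha> * U y\<bar> \<le> \<bar>\<alpha>\<bar>" by (simp add: abs_mult mult_left_le)
  then have "\<alpha> * U y \<le> \<bar>\<alpha>\<bar>" by linarith
  then show ?thesis by simp
qed

lemma G_ge: "y \<in> space S \<Longrightarrow> exp (- \<bar>\<alpha>\<bar>) \<le> G y"
proof -
  assume y: "y \<in> space S"
  have "\<bar>U y\<bar> \<le> 1" using Ub y by auto
  then have "\<bar>\<alpha> * U y\<bar> \<le> \<bar>\<alpha>\<bar>" by (simp add: abs_mult mult_left_le)
  then have "- \<bar>\<alpha>\<bar> \<le> \<alpha> * U y" by linarith
  then show ?thesis by simp
qed

lemma dens_pos: "good (w a) \<Longrightarrow> y \<in> space S \<Longrightarrow> y' \<in> space S \<Longrightarrow> 0 < dens N G q w (Suc a) y y'"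
  unfolding dens_def using q_pos good_q_pos good_G_pos by (auto intro!: divide_pos_pos mult_pos_pos)

lemma coef_ex: "\<exists>K>0. \<forall>(w::nat\<Rightarrow>nat\<Rightarrow>'a) (a::nat) y y'. good (w a) \<longrightarrow> y \<in> space S \<longrightarrow> y' \<in> space S \<longrightarrow> dens N G q w (Suc a) y y' / G y \<le> K"
proof -
  obtain em ep where e: "0 < em" "0 < ep" "\<forall>x\<in>space S. \<forall>y\<in>space S. em \<le> q x y \<and> q x y \<le> ep"
    using qbounds by blast
  let ?K = "ep * exp \<bar>\<alpha>\<bar> / em / exp (- \<bar>\<alpha>\<bar>)"
  show ?thesis
  proof (intro exI[of _ ?K] conjI allI impI)
    show "0 < ?K" using e by simp
    fix w :: "nat\<Rightarrow>nat\<Rightarrow>'a" and a :: nat and y y' assume g: "good (w a)" and y: "y \<in> space S" and y': "y' \<in> space S"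
    have wa: "\<And>i. i < N \<Longrightarrow> w a i \<in> space S" using g by (auto simp: good_def)
    have q1: "q y y' \<le> ep" "0 < q y y'" using e y y' q_pos by auto
    have eG: "eta N (w a) G \<le> exp \<bar>\<alpha>\<bar>" using N wa G_le by (intro eta_le) auto
    have eq: "em \<le> eta N (w a) (\<lambda>x. q x y')" using N wa e y' by (intro eta_ge) auto
    have "dens N G q w (Suc a) y y' = q y y' * eta N (w a) G / eta N (w a) (\<lambda>x. q x y')"
      by (simp add: dens_def)
    also have "\<dots> \<le> ep * exp \<bar>\<alpha>\<bar> / em"
    proof (rule frac_le)
      show "0 \<le> ep * exp \<bar>\<alpha>\<bar>" using e by simp
      show "q y y' * eta N (w a) G \<le> ep * exp \<bar>\<alpha>\<bar>"
        using q1 eG good_G_pos[of "w a"] by (intro mult_mono) auto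
      show "0 < em" by (rule e(1))
      show "em \<le> eta N (w a) (\<lambda>x. q x y')" by (rule eq)
    qed
    finally have d: "dens N G q w (Suc a) y y' \<le> ep * exp \<bar>\<alpha>\<bar> / em" .
    show "dens N G q w (Suc a) y y' / G y \<le> ?K"
    proof (rule frac_le)
      show "0 \<le> ep * exp \<bar>\<alpha>\<bar> / em" using e by simp
      show "dens N G q w (Suc a) y y' \<le> ep * exp \<bar>\<alpha>\<bar> / em" by (rule d)
      show "0 < exp (- \<bar>\<alpha>\<bar>)" by simp
      show "exp (- \<bar>\<alpha>\<bar>) \<le> G y" by (rule G_ge[OF y])
    qed
  qed
qed

definition Kc where
  "Kc = (SOME K. 0 < K \<and> (\<forall>(w::nat\<Rightarrow>nat\<Rightarrow>'a) (a::nat) y y'. good (w a) \<longrightarrow> y \<in> space S \<longrightarrow> y' \<in> space S \<longrightarrow> dens N G q w (Suc a) y y' / G y \<le> K))"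

lemma Kc: "0 < Kc" "good (w a) \<Longrightarrow> y \<in> space S \<Longrightarrow> y' \<in> space S \<Longrightarrow> dens N G q w (Suc a) y y' / G y \<le> Kc"
  using someI_ex[OF coef_ex] unfolding Kc_def by blast+

definition stepf where
  "stepf w k g y s = (\<Sum>j<N. dens N G q w k y (w k j) / (real N * G y) * g (w k j) (s + U (w k j)))"

primrec R :: "(nat \<Rightarrow> nat \<Rightarrow> 'a) \<Rightarrow> nat \<Rightarrow> nat \<Rightarrow> 'a \<Rightarrow> real \<Rightarrow> ('a \<Rightarrow> real \<Rightarrow> real) \<Rightarrow> real" where
  "R w a 0 y s g = g y s"
| "R w a (Suc p) y s g = stepf w (Suc a) (\<lambda>y' s'. R w (Suc a) p y' s' g) y s"

lemma R_snoc: "R w a (Suc p) y s g = R w a p y s (stepf w (Suc (a + p)) g)"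
proof (induction p arbitrary: a y s)
  case 0
  show ?case by simp
next
  case (Suc p)
  have "R w a (Suc (Suc p)) y s g = stepf w (Suc a) (\<lambda>y' s'. R w (Suc a) (Suc p) y' s' g) y s" by simp
  also have "(\<lambda>y' s'. R w (Suc a) (Suc p) y' s' g) = (\<lambda>y' s'. R w (Suc a) p y' s' (stepf w (Suc (Suc a + p)) g))"
    using Suc by (intro ext) blast
  finally show ?case by simp
qed

lemma R_local: "(\<And>i. i \<le> a + p \<Longrightarrow> w' i = w i) \<Longrightarrow> R w' a p y s g = R w a p y s g"
proof (induction p arbitrary: a y s)
  case 0
  show ?case by simp
next
  case (Suc p)
  have IH: "R w' (Suc a) p y' s' g = R w (Suc a) p y' s' g" for y' s'
    using Suc.prems by (intro Suc.IH) auto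
  have e1: "w' (Suc a) = w (Suc a)" "w' a = w a" using Suc.prems by auto
  show ?case
    by (simp add: stepf_def dens_def e1 IH)
qed

definition goodw :: "(nat \<Rightarrow> nat \<Rightarrow> 'a) \<Rightarrow> nat \<Rightarrow> nat \<Rightarrow> bool" where "goodw w a p \<longleftrightarrow> (\<forall>i. a \<le> i \<and> i \<le> a + p \<longrightarrow> good (w i))"

lemma goodw_Suc: "goodw w a (Suc p) \<Longrightarrow> goodw w (Suc a) p"
  unfolding goodw_def by auto

lemma goodw_W: "w \<in> space (W K) \<Longrightarrow> a + p \<le> K \<Longrightarrow> goodw w a p"
  unfolding goodw_def good_def
proof (intro allI impI)
  fix i j assume w: "w \<in> space (W K)" and K: "a + p \<le> K" and i: "a \<le> i \<and> i \<le> a + p" and j: "j < N"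
  have "i \<le> K" using i K by linarith
  then have "i \<in> {..K}" by simp
  then have "w i \<in> space Z" using w by (auto simp: space_PiM PiE_iff)
  then show "w i j \<in> space S" using j by (auto simp: space_PiM PiE_iff)
qed

lemma R_cong:
  assumes "goodw w a p" "y \<in> space S" "\<And>y' s'. y' \<in> space S \<Longrightarrow> g y' s' = g' y' s'"
  shows "R w a p y s g = R w a p y s g'"
  using assms
proof (induction p arbitrary: a y s)
  case 0
  then show ?case by simp
next
  case (Suc p)
  have wS: "\<And>j. j < N \<Longrightarrow> w (Suc a) j \<in> space S" using Suc.prems(1) by (auto simp: goodw_def good_def)
  have "R w (Suc a) p (w (Suc a) j) s' g = R w (Suc a) p (w (Suc a) j) s' g'" if "j < N" for j s'
    using Suc.prems wS[OF that] by (intro Suc.IH goodw_Suc) auto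
  then show ?case by (simp add: stepf_def)
qed

lemma R_bound:
  assumes "goodw w a p" "y \<in> space S" "\<And>y' s'. y' \<in> space S \<Longrightarrow> \<bar>g y' s'\<bar> \<le> B"
  shows "\<bar>R w a p y s g\<bar> \<le> Kc ^ p * B"
  using assms
proof (induction p arbitrary: a y s)
  case 0
  then show ?case by simp
next
  case (Suc p)
  have g: "good (w a)" using Suc.prems(1) by (auto simp: goodw_def)
  have wS: "\<And>j. j < N \<Longrightarrow> w (Suc a) j \<in> space S" using Suc.prems(1) by (auto simp: goodw_def good_def)
  have IH: "\<bar>R w (Suc a) p (w (Suc a) j) s' g\<bar> \<le> Kc ^ p * B" if "j < N" for j s'
    using Suc.prems wS[OF that] by (intro Suc.IH goodw_Suc) auto
  have c: "0 \<le> dens N G q w (Suc a) y (w (Suc a) j) / (real N * G y) \<and>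
     dens N G q w (Suc a) y (w (Suc a) j) / (real N * G y) \<le> Kc / real N" if "j < N" for j
  proof -
    have a1: "0 < dens N G q w (Suc a) y (w (Suc a) j)" by (rule dens_pos[of w a, OF g Suc.prems(2) wS[OF that]])
    have a2: "dens N G q w (Suc a) y (w (Suc a) j) / G y \<le> Kc" by (rule Kc(2)[of w a, OF g Suc.prems(2) wS[OF that]])
    have a3: "0 < real N" using N by simp
    have "dens N G q w (Suc a) y (w (Suc a) j) / (real N * G y) = (dens N G q w (Suc a) y (w (Suc a) j) / G y) / real N"
      by simp
    also have "\<dots> \<le> Kc / real N" by (rule divide_right_mono[OF a2]) (use a3 in simp)
    finally have b1: "dens N G q w (Suc a) y (w (Suc a) j) / (real N * G y) \<le> Kc / real N" .
    have b2: "0 \<le> dens N G q w (Suc a) y (w (Suc a) j) / (real N * G y)"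
      using a1 a3 by (intro divide_nonneg_pos) auto
    show ?thesis using b1 b2 by simp
  qed
  have "\<bar>R w a (Suc p) y s g\<bar> \<le> (\<Sum>j<N. \<bar>dens N G q w (Suc a) y (w (Suc a) j) / (real N * G y) *
        R w (Suc a) p (w (Suc a) j) (s + U (w (Suc a) j)) g\<bar>)"
    unfolding R.simps stepf_def by (rule sum_abs)
  also have "\<dots> \<le> (\<Sum>j<N. Kc / real N * (Kc ^ p * B))"
  proof (rule sum_mono)
    fix j assume "j \<in> {..<N}"
    then have j: "j < N" by simp
    show "\<bar>dens N G q w (Suc a) y (w (Suc a) j) / (real N * G y) * R w (Suc a) p (w (Suc a) j) (s + U (w (Suc a) j)) g\<bar>
       \<le> Kc / real N * (Kc ^ p * B)"
      unfolding abs_mult using c[OF j] IH[OF j] by (intro mult_mono) auto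
  qed
  also have "\<dots> = Kc ^ Suc p * B" using N by simp
  finally show ?case .
qed

end


context setting
begin

lemma comp_meas: "i \<le> K \<Longrightarrow> j < N \<Longrightarrow> (\<lambda>w. w i j) \<in> W K \<rightarrow>\<^sub>M S"
proof -
  assume i: "i \<le> K" and j: "j < N"
  have "(\<lambda>w. w i) \<in> W K \<rightarrow>\<^sub>M Z" using measurable_component_singleton[of i "{..K}" "\<lambda>_. Z"] i by simp
  moreover have "(\<lambda>z. z j) \<in> Z \<rightarrow>\<^sub>M S" using measurable_component_singleton[of j "{..<N}" "\<lambda>_. S"] j by simp
  ultimately show ?thesis by (rule measurable_compose)
qed

lemma R_meas:
  assumes "a + p \<le> K" "Y \<in> W K \<rightarrow>\<^sub>M S" "Sf \<in> borel_measurable (W K)"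
    and g[measurable]: "(\<lambda>(y, s). g y s) \<in> borel_measurable (S \<Otimes>\<^sub>M borel)"
  shows "(\<lambda>w. R w a p (Y w) (Sf w) g) \<in> borel_measurable (W K)"
  using assms(1-3)
proof (induction p arbitrary: a Y Sf)
  case 0
  then show ?case using measurable_compose[OF measurable_Pair g, of Y "W K" Sf] by simp
next
  case (Suc p)
  note [measurable] = Suc.prems(2,3)
  have ca[measurable]: "(\<lambda>w. w a i) \<in> W K \<rightarrow>\<^sub>M S" if "i < N" for i
    using comp_meas[of a K i] Suc.prems(1) that by simp
  have cs[measurable]: "(\<lambda>w. w (Suc a) i) \<in> W K \<rightarrow>\<^sub>M S" if "i < N" for i
    using comp_meas[of "Suc a" K i] Suc.prems(1) that by simp
  have IH[measurable]: "(\<lambda>w. R w (Suc a) p (w (Suc a) j) (Sf w + U (w (Suc a) j)) g) \<in> borel_measurable (W K)"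
    if "j < N" for j
    using Suc.prems(1) that by (intro Suc.IH) auto
  have Gm: "G \<in> borel_measurable S" by measurable
  have d[measurable]: "(\<lambda>w. dens N G q w (Suc a) (Y w) (w (Suc a) j)) \<in> borel_measurable (W K)" if j: "j < N" for j
  proof -
    have m1: "(\<lambda>w. q (Y w) (w (Suc a) j)) \<in> borel_measurable (W K)"
      by (rule q_meas2) (use Suc.prems(2) cs[OF j] in auto)
    have m2: "(\<lambda>w. \<Sum>i<N. G (w a i)) \<in> borel_measurable (W K)"
      by (rule borel_measurable_sum) (use measurable_compose[OF ca Gm] in auto)
    have m3: "(\<lambda>w. \<Sum>i<N. q (w a i) (w (Suc a) j)) \<in> borel_measurable (W K)"
      by (rule borel_measurable_sum) (use q_meas2[OF ca cs[OF j]] in auto)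
    have "(\<lambda>w. q (Y w) (w (Suc a) j) * ((\<Sum>i<N. G (w a i)) / real N) / ((\<Sum>i<N. q (w a i) (w (Suc a) j)) / real N))
       \<in> borel_measurable (W K)"
      using m1 m2 m3 by measurable
    then show ?thesis by (simp add: dens_def eta_def)
  qed
  show ?case
    unfolding R.simps stepf_def by measurable
qed

lemma R_integral:
  fixes gz :: "'b \<Rightarrow> 'a \<Rightarrow> real \<Rightarrow> real"
  assumes "goodw w a p" "y \<in> space S" "\<And>y' s'. y' \<in> space S \<Longrightarrow> integrable \<mu> (\<lambda>z. gz z y' s')"
  shows "integrable \<mu> (\<lambda>z. R w a p y s (gz z)) \<and>
    (\<integral>z. R w a p y s (gz z) \<partial>\<mu>) = R w a p y s (\<lambda>y' s'. \<integral>z. gz z y' s' \<partial>\<mu>)"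
  using assms(1,2)
proof (induction p arbitrary: a y s)
  case 0
  then show ?case using assms(3) by simp
next
  case (Suc p)
  have wS: "\<And>j. j < N \<Longrightarrow> w (Suc a) j \<in> space S" using Suc.prems(1) by (auto simp: goodw_def good_def)
  have IH: "integrable \<mu> (\<lambda>z. R w (Suc a) p (w (Suc a) j) s' (gz z)) \<and>
    (\<integral>z. R w (Suc a) p (w (Suc a) j) s' (gz z) \<partial>\<mu>) = R w (Suc a) p (w (Suc a) j) s' (\<lambda>y' s'. \<integral>z. gz z y' s' \<partial>\<mu>)"
    if "j < N" for j s'
    using Suc.prems wS[OF that] by (intro Suc.IH goodw_Suc) auto
  have int: "integrable \<mu> (\<lambda>z. dens N G q w (Suc a) y (w (Suc a) j) / (real N * G y) *
      R w (Suc a) p (w (Suc a) j) (s + U (w (Suc a) j)) (gz z))" if "j < N" for j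
    using IH[OF that] by auto
  have "integrable \<mu> (\<lambda>z. R w a (Suc p) y s (gz z))"
    unfolding R.simps stepf_def using int by auto
  moreover have "(\<integral>z. R w a (Suc p) y s (gz z) \<partial>\<mu>) = R w a (Suc p) y s (\<lambda>y' s'. \<integral>z. gz z y' s' \<partial>\<mu>)"
    unfolding R.simps stepf_def
    using int IH by (subst Bochner_Integration.integral_sum) (auto intro!: sum.cong)
  ultimately show ?case by blast
qed

lemma inner:
  assumes gk: "good (w k)" and y: "y \<in> space S"
    and h[measurable]: "h \<in> borel_measurable S" and hb: "\<And>z. z \<in> space S \<Longrightarrow> \<bar>h z\<bar> \<le> B"
  shows "integrable (PiM {..<N} (\<lambda>_. Phi S M G N (w k)))
      (\<lambda>z. \<Sum>j<N. dens N G q w (Suc k) y (z j) / (real N * G y) * h (z j)) \<and>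
    (\<integral>z. (\<Sum>j<N. dens N G q w (Suc k) y (z j) / (real N * G y) * h (z j)) \<partial>PiM {..<N} (\<lambda>_. Phi S M G N (w k)))
      = (\<integral>z. h z \<partial>M y)"
proof -
  let ?P = "Phi S M G N (w k)"
  let ?c = "\<lambda>z'. dens N G q w (Suc k) y z' / (real N * G y) * h z'"
  have wk: "\<And>i. i < N \<Longrightarrow> w k i \<in> space S" using gk by (auto simp: good_def)
  have P: "prob_space ?P" by (rule Phi_prob[OF gk])
  have Pd: "?P = density \<nu> (\<lambda>y'. ennreal (phidens (w k) y'))" by (rule Phi_density[OF gk])
  have pm: "(\<lambda>y'. phidens (w k) y') \<in> borel_measurable \<nu>"
    using phidens_meas[OF gk] sets_nu by (simp cong: measurable_cong_sets)
  have qk[measurable]: "(\<lambda>z'. q (w k i) z') \<in> borel_measurable S" if "i < N" for i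
    using wk[OF that] by (intro q_meas2) auto
  have qy[measurable]: "(\<lambda>z'. q y z') \<in> borel_measurable S" using y by (intro q_meas2) auto
  have m3: "(\<lambda>z'. \<Sum>i<N. q (w k i) z') \<in> borel_measurable S"
    by (rule borel_measurable_sum) (use qk in auto)
  have "(\<lambda>z'. q y z' * eta N (w k) G / ((\<Sum>i<N. q (w k i) z') / real N) / (real N * G y) * h z') \<in> borel_measurable S"
    using m3 by measurable
  then have cm: "?c \<in> borel_measurable S" by (simp add: dens_def eta_def[of N _ "\<lambda>x. q x _"])
  have cmn: "?c \<in> borel_measurable \<nu>" using cm sets_nu by (simp cong: measurable_cong_sets)
  have eq: "phidens (w k) z' *\<^sub>R ?c z' = q y z' * (h z' / (real N * G y))" if z': "z' \<in> space S" for z'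
  proof -
    have p1: "0 < eta N (w k) (\<lambda>x. q x z')" by (rule good_q_pos[OF gk z'])
    have p2: "0 < eta N (w k) G" by (rule good_G_pos)
    show ?thesis using p1 p2 unfolding dens_def by (simp add: field_simps)
  qed
  have int_nu: "integrable \<nu> (\<lambda>z'. q y z' * (h z' / (real N * G y)))"
    by (rule q_integrable[OF y, where B="B / (real N * G y)"]) (use sets_nu hb N in \<open>auto simp: abs_div cong: measurable_cong_sets intro!: divide_right_mono\<close>)
  have intc: "integrable ?P ?c"
    unfolding Pd
  proof (subst integrable_density)
    show "(\<lambda>y'. phidens (w k) y') \<in> borel_measurable \<nu>" by (rule pm)
    show "AE x in \<nu>. 0 \<le> phidens (w k) x"
      using good_q_pos[OF gk] good_G_pos by (intro AE_I2) (auto simp: space_nu less_imp_le)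
    show "integrable \<nu> (\<lambda>x. phidens (w k) x *\<^sub>R ?c x)"
      by (rule Bochner_Integration.integrable_cong[THEN iffD2, OF refl _ int_nu]) (use eq space_nu in auto)
    show "?c \<in> borel_measurable \<nu>" by (rule cmn)
  qed
  have "(\<integral>z. ?c z \<partial>?P) = (\<integral>z. phidens (w k) z *\<^sub>R ?c z \<partial>\<nu>)"
    unfolding Pd
    by (rule integral_density[OF cmn pm]) (use good_q_pos[OF gk] good_G_pos in \<open>auto simp: space_nu less_imp_le\<close>)
  also have "\<dots> = (\<integral>z. q y z * (h z / (real N * G y)) \<partial>\<nu>)"
    by (rule Bochner_Integration.integral_cong) (use eq space_nu in auto)
  also have "\<dots> = (\<integral>z. q y z * h z \<partial>\<nu>) / (real N * G y)"
    by (simp add: integral_divide_zero[symmetric] mult.assoc times_divide_eq_right[symmetric] del: times_divide_eq_right)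
  also have "\<dots> = (\<integral>z. h z \<partial>M y) / real N"
    using integral_M[OF y h] by simp
  finally have ic: "(\<integral>z. ?c z \<partial>?P) = (\<integral>z. h z \<partial>M y) / real N" .
  have "(\<integral>z. (\<Sum>j<N. ?c (z j)) \<partial>PiM {..<N} (\<lambda>_. ?P)) = real N * (\<integral>z. ?c z \<partial>?P)"
    by (rule PiM_sum_integral[OF P intc])
  moreover have "integrable (PiM {..<N} (\<lambda>_. ?P)) (\<lambda>z. \<Sum>j<N. ?c (z j))"
  proof (rule Bochner_Integration.integrable_sum)
    fix j assume "j \<in> {..<N}"
    then have j: "j < N" by simp
    have comp: "(\<lambda>z. z j) \<in> PiM {..<N} (\<lambda>_. ?P) \<rightarrow>\<^sub>M ?P"
      using measurable_component_singleton[of j "{..<N}" "\<lambda>_. ?P"] j by simp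
    have d: "distr (PiM {..<N} (\<lambda>_. ?P)) ?P (\<lambda>z. z j) = ?P"
      using distr_PiM_component[of "{..<N}" "\<lambda>_. ?P" j] P j by simp
    have cmP: "?c \<in> borel_measurable ?P" using cm by (simp cong: measurable_cong_sets)
    show "integrable (PiM {..<N} (\<lambda>_. ?P)) (\<lambda>z. ?c (z j))"
      using integrable_distr_eq[OF comp cmP] d intc by simp
  qed
  moreover have "real N * (\<integral>z. ?c z \<partial>?P) = (\<integral>z. h z \<partial>M y)"
  proof -
    have nz: "real N \<noteq> 0" using N by simp
    have "real N * (\<integral>z. ?c z \<partial>?P) = real N * ((\<integral>z. h z \<partial>M y) / real N)" by (simp only: ic)
    also have "\<dots> = (\<integral>z. h z \<partial>M y)" using nz by simp
    finally show ?thesis .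
  qed
  ultimately show ?thesis by simp
qed

end


context setting
begin

lemma Hf_abs: "y \<in> space S \<Longrightarrow> \<bar>Hf t r y s\<bar> \<le> 1"
  using Hf_bounds[of y t r s] by simp

lemma particle_main:
  assumes mu: "prob_space \<mu>" "sets \<mu> = sets S" and x: "x \<in> space S"
  shows "p \<le> m \<Longrightarrow> (\<integral>w. R w n p x 0 (Hf t (m - p)) \<partial>particle_law S \<mu> M G N (n + p)) = Hf t m x 0"
proof (induction p)
  case 0
  interpret prob_space "particle_law S \<mu> M G N n" using pl_facts[OF mu] by blast
  show ?case by (simp add: prob_space)
next
  case (Suc p)
  then have pm: "p < m" and IH: "(\<integral>w. R w n p x 0 (Hf t (m - p)) \<partial>particle_law S \<mu> M G N (n + p)) = Hf t m x 0"
    by auto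
  define g where "g = Hf t (m - Suc p)"
  have mp: "m - p = Suc (m - Suc p)" using pm by simp
  let ?E = "\<lambda>w z. (\<lambda>i\<in>{..Suc (n + p)}. if i = Suc (n + p) then z else w i)"
  define gz where "gz = (\<lambda>w z y s. \<Sum>j<N. dens N G q w (Suc (n + p)) y (z j) / (real N * G y) * g (z j) (s + U (z j)))"
  have xm: "(\<lambda>_. x) \<in> W (Suc (n + p)) \<rightarrow>\<^sub>M S" using x by simp
  have fm: "(\<lambda>w. R w n (Suc p) x 0 g) \<in> borel_measurable (W (Suc (n + p)))"
    using R_meas[of n "Suc p" "Suc (n + p)" "\<lambda>_. x" "\<lambda>_. 0" g, OF _ xm] unfolding g_def by simp
  have fb: "\<bar>R w n (Suc p) x 0 g\<bar> \<le> Kc ^ Suc p * 1" if "w \<in> space (W (Suc (n + p)))" for w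
    using goodw_W[OF that, of n "Suc p"] x Hf_abs unfolding g_def by (intro R_bound) auto
  have "(\<integral>w. R w n (Suc p) x 0 (Hf t (m - Suc p)) \<partial>particle_law S \<mu> M G N (n + Suc p)) =
     (\<integral>w. R w n (Suc p) x 0 g \<partial>particle_law S \<mu> M G N (Suc (n + p)))"
    by (simp add: g_def)
  also have "\<dots> = (\<integral>w. (\<integral>z. R (?E w z) n (Suc p) x 0 g \<partial>PiM {..<N} (\<lambda>_. Phi S M G N (w (n + p)))) \<partial>particle_law S \<mu> M G N (n + p))"
    by (rule pl_integral[OF mu fm fb])
  also have "\<dots> = (\<integral>w. R w n p x 0 (Hf t (m - p)) \<partial>particle_law S \<mu> M G N (n + p))"
  proof (rule Bochner_Integration.integral_cong[OF refl])
    fix w assume "w \<in> space (particle_law S \<mu> M G N (n + p))"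
    then have w: "w \<in> space (W (n + p))" using space_pl[OF mu] by simp
    have gw: "goodw w n p" using goodw_W[OF w] by simp
    have gk: "good (w (n + p))" using gw by (auto simp: goodw_def)
    have a: "R (?E w z) n (Suc p) x 0 g = R w n p x 0 (gz w z)" for z
    proof -
      have "R (?E w z) n (Suc p) x 0 g = R (?E w z) n p x 0 (stepf (?E w z) (Suc (n + p)) g)"
        by (rule R_snoc)
      also have "\<dots> = R w n p x 0 (stepf (?E w z) (Suc (n + p)) g)"
        by (rule R_local) auto
      also have "stepf (?E w z) (Suc (n + p)) g = gz w z"
        unfolding gz_def stepf_def dens_def by (intro ext) simp
      finally show ?thesis .
    qed
    have inn: "integrable (PiM {..<N} (\<lambda>_. Phi S M G N (w (n + p)))) (\<lambda>z. gz w z y' s') \<and>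
        (\<integral>z. gz w z y' s' \<partial>PiM {..<N} (\<lambda>_. Phi S M G N (w (n + p)))) = (\<integral>z. g z (s' + U z) \<partial>M y')"
      if y': "y' \<in> space S" for y' s'
      unfolding gz_def
      by (rule inner[of w "n + p", OF gk y', where B=1]) (use Hf_abs in \<open>auto simp: g_def\<close>)
    have "(\<integral>z. R (?E w z) n (Suc p) x 0 g \<partial>PiM {..<N} (\<lambda>_. Phi S M G N (w (n + p)))) =
        (\<integral>z. R w n p x 0 (gz w z) \<partial>PiM {..<N} (\<lambda>_. Phi S M G N (w (n + p))))"
      by (simp only: a)
    also have "\<dots> = R w n p x 0 (\<lambda>y' s'. \<integral>z. gz w z y' s' \<partial>PiM {..<N} (\<lambda>_. Phi S M G N (w (n + p))))"
      using R_integral[OF gw x, of "PiM {..<N} (\<lambda>_. Phi S M G N (w (n + p)))" "gz w"] inn by blast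
    also have "\<dots> = R w n p x 0 (Hf t (m - p))"
    proof (rule R_cong[OF gw x])
      fix y' s' assume y': "y' \<in> space S"
      show "(\<integral>z. gz w z y' s' \<partial>PiM {..<N} (\<lambda>_. Phi S M G N (w (n + p)))) = Hf t (m - p) y' s'"
        using inn[OF y', of s'] unfolding mp g_def by simp
    qed
    finally show "(\<integral>z. R (?E w z) n (Suc p) x 0 g \<partial>PiM {..<N} (\<lambda>_. Phi S M G N (w (n + p)))) = R w n p x 0 (Hf t (m - p))" .
  qed
  finally show ?case using IH by simp
qed

lemma particle_extend:
  assumes mu: "prob_space \<mu>" "sets \<mu> = sets S" and x: "x \<in> space S"
    and gm: "(\<lambda>(y, s). g y s) \<in> borel_measurable (S \<Otimes>\<^sub>M borel)" and gb: "\<And>y s. y \<in> space S \<Longrightarrow> \<bar>g y s\<bar> \<le> 1"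
  shows "(\<integral>w. R w n m x 0 g \<partial>particle_law S \<mu> M G N (n + m + d)) = (\<integral>w. R w n m x 0 g \<partial>particle_law S \<mu> M G N (n + m))"
proof (induction d)
  case 0
  then show ?case by simp
next
  case (Suc d)
  let ?k = "n + m + d"
  have xm: "(\<lambda>_. x) \<in> W (Suc ?k) \<rightarrow>\<^sub>M S" using x by simp
  have fm: "(\<lambda>w. R w n m x 0 g) \<in> borel_measurable (W (Suc ?k))"
    using R_meas[of n m "Suc ?k" "\<lambda>_. x" "\<lambda>_. 0" g, OF _ xm] gm by simp
  have fb: "\<bar>R w n m x 0 g\<bar> \<le> Kc ^ m * 1" if "w \<in> space (W (Suc ?k))" for w
    using goodw_W[OF that, of n m] x gb by (intro R_bound) auto
  have "(\<integral>w. R w n m x 0 g \<partial>particle_law S \<mu> M G N (n + m + Suc d)) =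
      (\<integral>w. R w n m x 0 g \<partial>particle_law S \<mu> M G N (Suc ?k))" by simp
  also have "\<dots> = (\<integral>w. (\<integral>z. R (\<lambda>i\<in>{..Suc ?k}. if i = Suc ?k then z else w i) n m x 0 g
       \<partial>PiM {..<N} (\<lambda>_. Phi S M G N (w ?k))) \<partial>particle_law S \<mu> M G N ?k)"
    by (rule pl_integral[OF mu fm fb])
  also have "\<dots> = (\<integral>w. R w n m x 0 g \<partial>particle_law S \<mu> M G N ?k)"
  proof (rule Bochner_Integration.integral_cong[OF refl])
    fix w assume "w \<in> space (particle_law S \<mu> M G N ?k)"
    then have w: "w \<in> space (W ?k)" using space_pl[OF mu] by simp
    have "R (\<lambda>i\<in>{..Suc ?k}. if i = Suc ?k then z else w i) n m x 0 g = R w n m x 0 g" for z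
      by (rule R_local) auto
    then show "(\<integral>z. R (\<lambda>i\<in>{..Suc ?k}. if i = Suc ?k then z else w i) n m x 0 g
       \<partial>PiM {..<N} (\<lambda>_. Phi S M G N (w ?k))) = R w n m x 0 g"
    proof -
      assume e: "\<And>z. R (\<lambda>i\<in>{..Suc ?k}. if i = Suc ?k then z else w i) n m x 0 g = R w n m x 0 g"
      interpret prob_space "PiM {..<N} (\<lambda>_. Phi S M G N (w ?k))"
        by (rule prob_space_PiM) (rule Phi_prob, use w in \<open>auto simp: good_def space_PiM PiE_iff\<close>)
      show ?thesis by (simp add: e prob_space)
    qed
  qed
  finally show ?case using Suc by simp
qed

end


lemma expect_bind_fin:
  fixes g :: "'b \<Rightarrow> real"
  assumes fin: "finite (set_pmf p)" and fin2: "\<And>x. x \<in> set_pmf p \<Longrightarrow> finite (set_pmf (f x))"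
  shows "measure_pmf.expectation (bind_pmf p f) g = measure_pmf.expectation p (\<lambda>x. measure_pmf.expectation (f x) g)"
proof -
  define A where "A = (\<Union>x\<in>set_pmf p. set_pmf (f x))"
  have fA: "finite A" unfolding A_def using fin fin2 by auto
  have "measure_pmf.expectation (bind_pmf p f) g = (\<Sum>a\<in>A. g a * pmf (bind_pmf p f) a)"
    by (rule integral_measure_pmf_real[OF fA]) (auto simp: A_def)
  also have "\<dots> = (\<Sum>a\<in>A. g a * (\<Sum>x\<in>set_pmf p. pmf (f x) a * pmf p x))"
  proof (rule sum.cong[OF refl])
    fix a assume "a \<in> A"
    have "pmf (bind_pmf p f) a = (\<integral>x. pmf (f x) a \<partial>measure_pmf p)" by (rule pmf_bind)
    also have "\<dots> = (\<Sum>x\<in>set_pmf p. pmf (f x) a * pmf p x)"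
      by (rule integral_measure_pmf_real[OF fin]) auto
    finally show "g a * pmf (bind_pmf p f) a = g a * (\<Sum>x\<in>set_pmf p. pmf (f x) a * pmf p x)" by simp
  qed
  also have "\<dots> = (\<Sum>a\<in>A. \<Sum>x\<in>set_pmf p. g a * pmf (f x) a * pmf p x)"
    by (simp add: sum_distrib_left mult.assoc)
  also have "\<dots> = (\<Sum>x\<in>set_pmf p. \<Sum>a\<in>A. g a * pmf (f x) a * pmf p x)"
    by (rule sum.swap)
  also have "\<dots> = (\<Sum>x\<in>set_pmf p. (\<Sum>a\<in>A. g a * pmf (f x) a) * pmf p x)"
    by (simp add: sum_distrib_right)
  also have "\<dots> = (\<Sum>x\<in>set_pmf p. measure_pmf.expectation (f x) g * pmf p x)"
  proof (rule sum.cong[OF refl])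
    fix x assume x: "x \<in> set_pmf p"
    have "measure_pmf.expectation (f x) g = (\<Sum>a\<in>A. g a * pmf (f x) a)"
      by (rule integral_measure_pmf_real[OF fA]) (use x in \<open>auto simp: A_def\<close>)
    then show "(\<Sum>a\<in>A. g a * pmf (f x) a) * pmf p x = measure_pmf.expectation (f x) g * pmf p x" by simp
  qed
  also have "\<dots> = measure_pmf.expectation p (\<lambda>x. measure_pmf.expectation (f x) g)"
    by (rule integral_measure_pmf_real[OF fin, symmetric]) auto
  finally show ?thesis .
qed

lemma embed_facts:
  fixes f :: "nat \<Rightarrow> real"
  assumes nn: "\<And>j. 0 \<le> f j" and z: "\<And>j. j \<ge> N \<Longrightarrow> f j = 0" and s: "(\<Sum>j<N. f j) = 1"
  shows "measure_pmf.expectation (map_pmf h (embed_pmf f)) (\<phi> :: _ \<Rightarrow> real) = (\<Sum>j<N. f j * \<phi> (h j))"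
    and "set_pmf (map_pmf h (embed_pmf f)) \<subseteq> h ` {..<N}"
proof -
  have prob: "(\<integral>\<^sup>+x. ennreal (f x) \<partial>count_space UNIV) = 1"
  proof -
    have "(\<integral>\<^sup>+x. ennreal (f x) \<partial>count_space UNIV) = (\<Sum>j<N. ennreal (f j))"
      by (rule nn_integral_count_space') (use z in \<open>auto simp: not_less\<close>)
    also have "\<dots> = ennreal (\<Sum>j<N. f j)" using nn by (simp add: sum_ennreal)
    finally show ?thesis using s by simp
  qed
  have pe: "pmf (embed_pmf f) j = f j" for j by (rule pmf_embed_pmf[OF nn prob])
  have se: "set_pmf (embed_pmf f) \<subseteq> {..<N}"
    using set_embed_pmf[OF nn prob] z by (auto simp: not_less[symmetric])
  show "set_pmf (map_pmf h (embed_pmf f)) \<subseteq> h ` {..<N}" using se by auto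
  have "measure_pmf.expectation (map_pmf h (embed_pmf f)) \<phi> = measure_pmf.expectation (embed_pmf f) (\<lambda>j. \<phi> (h j))"
    by simp
  also have "\<dots> = (\<Sum>j<N. \<phi> (h j) * pmf (embed_pmf f) j)"
    by (rule integral_measure_pmf_real) (use se in auto)
  finally show "measure_pmf.expectation (map_pmf h (embed_pmf f)) \<phi> = (\<Sum>j<N. f j * \<phi> (h j))"
    by (simp add: pe mult.commute)
qed

lemma eta_div: "eta N z (\<lambda>x. f x / c) = eta N z f / c"
  unfolding eta_def by (simp add: sum_divide_distrib mult_ac)

context setting
begin

lemma Qpk_K: "Qpk N G q w K K f = f"
  by (simp add: Qpk_def)

lemma Qpk_step: "1 \<le> p \<Longrightarrow> p \<le> K \<Longrightarrow> Qpk N G q w (p - 1) K f = Qop N G q w p (Qpk N G q w p K f)"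
proof -
  assume p: "1 \<le> p" "p \<le> K"
  have e1: "K - (p - 1) = Suc (K - p)" using p by simp
  have e2: "K - (K - p) = p" using p by simp
  show ?thesis unfolding Qpk_def e1 Qcomp.simps e2 ..
qed

lemma hpk_eq: "p \<le> K \<Longrightarrow> hpk N G q w p K = (\<lambda>y. Qpk N G q w p K (\<lambda>_. 1) y / eta N (w p) (Qpk N G q w p K (\<lambda>_. 1)))"
  using N by (intro ext) (auto simp: hpk_def Qpk_K)

lemma Qop_div: "Qop N G q w k (\<lambda>x. f x / c) y = Qop N G q w k f y / c"
  unfolding Qop_def by (simp add: eta_div[symmetric] times_divide_eq_right)

lemma Qop_pos:
  assumes "1 \<le> k" "k \<le> K" "goodw w 0 K" "y \<in> space S" "\<And>j. j < N \<Longrightarrow> 0 < f (w k j)"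
  shows "0 < Qop N G q w k f y"
proof -
  have k: "k = Suc (k - 1)" using assms by simp
  have g1: "good (w (k - 1))" using assms(1-3) by (auto simp: goodw_def)
  have g2: "\<And>j. j < N \<Longrightarrow> w k j \<in> space S" using assms(1-3) by (auto simp: goodw_def good_def)
  have d: "0 < dens N G q w k y (w k j)" if "j < N" for j
    using dens_pos[of w "k - 1", OF g1 assms(4) g2[OF that]] k by simp
  show ?thesis unfolding Qop_def
    using N d assms(5) by (intro eta_pos) auto
qed

lemma Qcomp_pos: "d \<le> K \<Longrightarrow> goodw w 0 K \<Longrightarrow> y \<in> space S \<Longrightarrow> 0 < Qcomp N G q w K d (\<lambda>_. 1) y"
proof (induction d arbitrary: y)
  case 0
  then show ?case by simp
next
  case (Suc d)
  have "0 < Qop N G q w (K - d) (Qcomp N G q w K d (\<lambda>_. 1)) y"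
  proof (rule Qop_pos[of _ K])
    fix j assume j: "j < N"
    have "w (K - d) j \<in> space S" using Suc.prems j by (auto simp: goodw_def good_def)
    then show "0 < Qcomp N G q w K d (\<lambda>_. 1) (w (K - d) j)" using Suc by simp
  qed (use Suc.prems in auto)
  then show ?case by simp
qed

lemma Qpk_pos: "p \<le> K \<Longrightarrow> goodw w 0 K \<Longrightarrow> y \<in> space S \<Longrightarrow> 0 < Qpk N G q w p K (\<lambda>_. 1) y"
  unfolding Qpk_def by (rule Qcomp_pos) auto

lemma eta_Qpk_pos: "p \<le> K \<Longrightarrow> goodw w 0 K \<Longrightarrow> 0 < eta N (w p) (Qpk N G q w p K (\<lambda>_. 1))"
  using N Qpk_pos by (intro eta_pos) (auto simp: goodw_def good_def)

lemma hpk_pos: "p \<le> K \<Longrightarrow> goodw w 0 K \<Longrightarrow> y \<in> space S \<Longrightarrow> 0 < hpk N G q w p K y"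
  using hpk_eq Qpk_pos eta_Qpk_pos by (simp add: divide_pos_pos)

lemma eta_Qop:
  assumes "1 \<le> p" "p \<le> K" "goodw w 0 K"
  shows "eta N (w (p - 1)) (Qop N G q w p f) = eta N (w (p - 1)) G * eta N (w p) f"
proof -
  let ?y = "w (p - 1)" and ?z = "w p"
  let ?D = "\<lambda>j. eta N ?y (\<lambda>x. q x (?z j))"
  let ?l = "eta N ?y G"
  have gy: "good ?y" and gz: "good ?z" using assms by (auto simp: goodw_def)
  have Dpos: "0 < ?D j" if "j < N" for j
    using good_q_pos[OF gy] gz that by (auto simp: good_def)
  have dd: "dens N G q w p x' x'' = q x' x'' * ?l / eta N ?y (\<lambda>x. q x x'')" for x' x''
    by (simp add: dens_def)
  have "eta N ?y (Qop N G q w p f) = (\<Sum>i<N. (\<Sum>j<N. q (?y i) (?z j) * ?l / ?D j * f (?z j)) / real N) / real N"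
    unfolding eta_def[of N ?y] Qop_def eta_def[of N ?z] dd ..
  also have "\<dots> = (\<Sum>i<N. \<Sum>j<N. q (?y i) (?z j) / real N * (?l / ?D j * f (?z j))) / real N"
    by (simp add: sum_divide_distrib mult_ac)
  also have "\<dots> = (\<Sum>j<N. \<Sum>i<N. q (?y i) (?z j) / real N * (?l / ?D j * f (?z j))) / real N"
    by (subst sum.swap) (rule refl)
  also have "\<dots> = (\<Sum>j<N. (\<Sum>i<N. q (?y i) (?z j)) / real N * (?l / ?D j * f (?z j))) / real N"
    by (simp add: sum_divide_distrib sum_distrib_right)
  also have "\<dots> = (\<Sum>j<N. ?l * f (?z j)) / real N"
  proof (intro arg_cong[where f="\<lambda>x. x / real N"] sum.cong refl)
    fix j assume "j \<in> {..<N}"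
    then have j: "j < N" by simp
    have "(\<Sum>i<N. q (?y i) (?z j)) / real N = ?D j" by (simp add: eta_def)
    then show "(\<Sum>i<N. q (?y i) (?z j)) / real N * (?l / ?D j * f (?z j)) = ?l * f (?z j)"
      using Dpos[OF j] by simp
  qed
  also have "\<dots> = ?l * eta N ?z f" by (simp add: eta_def sum_distrib_left)
  finally show ?thesis .
qed

lemma weights_sum:
  assumes "1 \<le> P" "P \<le> K" "goodw w 0 K" "y \<in> space S"
  shows "(\<Sum>j<N. dens N G q w P y (w P j) * hpk N G q w P K (w P j)
      / (real N * lam N G w (P - 1) * hpk N G q w (P - 1) K y)) = 1"
proof -
  let ?A = "Qpk N G q w P K (\<lambda>_. 1)"
  let ?c = "eta N (w P) ?A"
  let ?B = "Qpk N G q w (P - 1) K (\<lambda>_. 1)"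
  let ?l = "lam N G w (P - 1)"
  have cpos: "0 < ?c" using eta_Qpk_pos assms by simp
  have Bpos: "0 < ?B y" using Qpk_pos assms by simp
  have lpos: "0 < ?l" by (simp add: lam_def good_G_pos)
  have B: "?B = Qop N G q w P ?A" using Qpk_step assms by simp
  have hP: "hpk N G q w P K = (\<lambda>x. ?A x / ?c)" using hpk_eq assms by simp
  have hP1: "hpk N G q w (P - 1) K y = ?B y / (?l * ?c)"
  proof -
    have "hpk N G q w (P - 1) K y = ?B y / eta N (w (P - 1)) ?B" using hpk_eq[of "P - 1" K] assms by simp
    also have "eta N (w (P - 1)) ?B = ?l * ?c" unfolding B lam_def using eta_Qop assms by simp
    finally show ?thesis .
  qed
  have "(\<Sum>j<N. dens N G q w P y (w P j) * hpk N G q w P K (w P j)) = real N * Qop N G q w P (hpk N G q w P K) y"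
    unfolding Qop_def eta_def using N by simp
  also have "\<dots> = real N * (?B y / ?c)" unfolding hP Qop_div B ..
  finally have s: "(\<Sum>j<N. dens N G q w P y (w P j) * hpk N G q w P K (w P j)) = real N * (?B y / ?c)" .
  have "(\<Sum>j<N. dens N G q w P y (w P j) * hpk N G q w P K (w P j) / (real N * ?l * hpk N G q w (P - 1) K y))
      = (\<Sum>j<N. dens N G q w P y (w P j) * hpk N G q w P K (w P j)) / (real N * ?l * hpk N G q w (P - 1) K y)"
    by (simp add: sum_divide_distrib)
  also have "\<dots> = 1" unfolding s hP1 using cpos Bpos lpos N by (simp add: field_simps)
  finally show ?thesis .
qed

end


lemma expect_cong_pmf:
  "(\<And>x. x \<in> set_pmf p \<Longrightarrow> f x = g x) \<Longrightarrow> measure_pmf.expectation p f = measure_pmf.expectation p (g :: _ \<Rightarrow> real)"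
  by (intro integral_cong_AE) (auto simp: AE_measure_pmf_iff)

lemma term_identity:
  fixes d hz l hy Gy Pi0 h0 gv n :: real
  assumes "hz \<noteq> 0" "l \<noteq> 0" "hy \<noteq> 0" "n \<noteq> 0" "Gy \<noteq> 0"
  shows "(d * hz / (n * l * hy)) * ((Pi0 * (l / Gy)) * (h0 / hz) * gv) = (Pi0 * (h0 / hy)) * (d / (n * Gy) * gv)"
  using assms by (simp add: field_simps)

context setting
begin

definition Pi_w where
  "Pi_w w n K p xs = (\<Prod>r<p. lam N G w (n + r) / G (xs r)) * (hpk N G q w n K (xs 0) / hpk N G q w (n + p) K (xs p))"

lemma cc_main:
  assumes gw: "goodw w 0 (2 * n)" and x: "x \<in> space S"
  shows "p \<le> n \<Longrightarrow> finite (set_pmf (check_chain N G q w n x p)) \<and>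
    (\<forall>xs\<in>set_pmf (check_chain N G q w n x p). xs p \<in> space S) \<and>
    (\<forall>g. measure_pmf.expectation (check_chain N G q w n x p)
        (\<lambda>xs. Pi_w w n (2 * n) p xs * g (xs p) (\<Sum>r=1..p. U (xs r))) = R w n p x 0 g)"
proof (induction p)
  case 0
  have "0 < hpk N G q w n (2 * n) x" using hpk_pos[OF _ gw x, of n] by simp
  then show ?case using x by (simp add: Pi_w_def)
next
  case (Suc p)
  let ?K = "2 * n"
  let ?P = "Suc (n + p)"
  let ?cc = "check_chain N G q w n x p"
  from Suc have pn: "p < n" and fin: "finite (set_pmf ?cc)" and sp: "\<forall>xs\<in>set_pmf ?cc. xs p \<in> space S"
    and IH: "\<And>g. measure_pmf.expectation ?cc (\<lambda>xs. Pi_w w n ?K p xs * g (xs p) (\<Sum>r=1..p. U (xs r))) = R w n p x 0 g"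
    by auto
  have PK: "1 \<le> ?P" "?P \<le> ?K" using pn by auto
  have wP: "\<And>j. j < N \<Longrightarrow> w ?P j \<in> space S" using gw PK by (auto simp: goodw_def good_def)
  define wt where "wt = (\<lambda>y j. if j < N then dens N G q w ?P y (w ?P j) * hpk N G q w ?P ?K (w ?P j)
         / (real N * lam N G w (?P - 1) * hpk N G q w (?P - 1) ?K y) else 0)"
  have Pk: "Pker N G q w (n + Suc p) ?K y = map_pmf (w ?P) (embed_pmf (wt y))" for y
    unfolding Pker_def wt_def by (simp only: add_Suc_right)
  have gP: "good (w (n + p))" using gw pn by (auto simp: goodw_def)
  have wt_nn: "0 \<le> wt y j" if y: "y \<in> space S" for y j
  proof (cases "j < N")
    case True
    have "0 < dens N G q w (Suc (n + p)) y (w ?P j)" by (rule dens_pos[of w "n + p", OF gP y wP[OF True]])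
    moreover have "0 < hpk N G q w ?P ?K (w ?P j)" using hpk_pos[OF PK(2) gw wP[OF True]] .
    moreover have "0 < hpk N G q w (?P - 1) ?K y" using hpk_pos[OF _ gw y, of "?P - 1"] PK by simp
    moreover have "0 < lam N G w (?P - 1)" by (simp add: lam_def good_G_pos)
    ultimately show ?thesis using True N unfolding wt_def by simp
  qed (simp add: wt_def)
  have wt_sum: "(\<Sum>j<N. wt y j) = 1" if y: "y \<in> space S" for y
    using weights_sum[OF PK gw y] by (simp add: wt_def)
  have ex: "measure_pmf.expectation (Pker N G q w (n + Suc p) ?K y) \<phi> = (\<Sum>j<N. wt y j * \<phi> (w ?P j))"
    and ss: "set_pmf (Pker N G q w (n + Suc p) ?K y) \<subseteq> w ?P ` {..<N}"
    if y: "y \<in> space S" for y and \<phi> :: "'a \<Rightarrow> real"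
  proof -
    have e1: "\<And>j. 0 \<le> wt y j" by (rule wt_nn[OF y])
    have e2: "\<And>j. N \<le> j \<Longrightarrow> wt y j = 0" by (simp add: wt_def)
    have e3: "(\<Sum>j<N. wt y j) = 1" by (rule wt_sum[OF y])
    show "measure_pmf.expectation (Pker N G q w (n + Suc p) ?K y) \<phi> = (\<Sum>j<N. wt y j * \<phi> (w ?P j))"
      unfolding Pk by (rule embed_facts(1)[OF e1 e2 e3])
    show "set_pmf (Pker N G q w (n + Suc p) ?K y) \<subseteq> w ?P ` {..<N}"
      unfolding Pk by (rule embed_facts(2)[OF e1 e2 e3])
  qed
  let ?ker = "\<lambda>xs. map_pmf (\<lambda>y. xs(Suc p := y)) (Pker N G q w (n + Suc p) ?K (xs p))"
  have cc_eq: "check_chain N G q w n x (Suc p) = bind_pmf ?cc ?ker" by simp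
  have fin2: "finite (set_pmf (?ker xs))" if "xs \<in> set_pmf ?cc" for xs
  proof -
    have "set_pmf (?ker xs) \<subseteq> (\<lambda>y. xs(Suc p := y)) ` w ?P ` {..<N}"
      using ss[of "xs p"] sp that by auto
    then show ?thesis by (rule finite_subset) auto
  qed
  have finS: "finite (set_pmf (check_chain N G q w n x (Suc p)))"
    unfolding cc_eq using fin fin2 by simp
  have spS: "\<forall>xs\<in>set_pmf (check_chain N G q w n x (Suc p)). xs (Suc p) \<in> space S"
  proof
    fix xs' assume "xs' \<in> set_pmf (check_chain N G q w n x (Suc p))"
    then obtain xs y where xs: "xs \<in> set_pmf ?cc" and y: "y \<in> set_pmf (Pker N G q w (n + Suc p) ?K (xs p))"
      and e: "xs' = xs(Suc p := y)" unfolding cc_eq by auto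
    have "y \<in> w ?P ` {..<N}" using ss[of "xs p"] sp xs y by auto
    then show "xs' (Suc p) \<in> space S" using e wP by auto
  qed
  have expS: "measure_pmf.expectation (check_chain N G q w n x (Suc p))
        (\<lambda>xs. Pi_w w n ?K (Suc p) xs * g (xs (Suc p)) (\<Sum>r=1..Suc p. U (xs r))) = R w n (Suc p) x 0 g" for g
  proof -
    let ?F = "\<lambda>xs. Pi_w w n ?K (Suc p) xs * g (xs (Suc p)) (\<Sum>r=1..Suc p. U (xs r))"
    have "measure_pmf.expectation (check_chain N G q w n x (Suc p)) ?F =
        measure_pmf.expectation ?cc (\<lambda>xs. measure_pmf.expectation (?ker xs) ?F)"
      unfolding cc_eq by (rule expect_bind_fin[OF fin fin2])
    also have "\<dots> = measure_pmf.expectation ?cc (\<lambda>xs. Pi_w w n ?K p xs * stepf w ?P g (xs p) (\<Sum>r=1..p. U (xs r)))"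
    proof (rule expect_cong_pmf)
      fix xs assume xs: "xs \<in> set_pmf ?cc"
      have y: "xs p \<in> space S" using sp xs by auto
      have "measure_pmf.expectation (?ker xs) ?F =
          measure_pmf.expectation (Pker N G q w (n + Suc p) ?K (xs p)) (\<lambda>y. ?F (xs(Suc p := y)))"
        by simp
      also have "\<dots> = (\<Sum>j<N. wt (xs p) j * ?F (xs(Suc p := w ?P j)))"
        by (rule ex[OF y])
      also have "\<dots> = (\<Sum>j<N. Pi_w w n ?K p xs * (dens N G q w ?P (xs p) (w ?P j) / (real N * G (xs p)) *
           g (w ?P j) ((\<Sum>r=1..p. U (xs r)) + U (w ?P j))))"
      proof (rule sum.cong[OF refl])
        fix j assume "j \<in> {..<N}"
        then have j: "j < N" by simp
        let ?z = "w ?P j"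
        have s1: "(\<Sum>r=1..Suc p. U ((xs(Suc p := ?z)) r)) = (\<Sum>r=1..p. U (xs r)) + U ?z"
        proof -
          have "(\<Sum>r=1..Suc p. U ((xs(Suc p := ?z)) r)) = (\<Sum>r=1..p. U ((xs(Suc p := ?z)) r)) + U ?z"
            by simp
          also have "(\<Sum>r=1..p. U ((xs(Suc p := ?z)) r)) = (\<Sum>r=1..p. U (xs r))"
            by (intro sum.cong) auto
          finally show ?thesis .
        qed
        have p1: "(\<Prod>r<Suc p. lam N G w (n + r) / G ((xs(Suc p := ?z)) r)) =
            (\<Prod>r<p. lam N G w (n + r) / G (xs r)) * (lam N G w (n + p) / G (xs p))"
        proof -
          have "(\<Prod>r<p. lam N G w (n + r) / G ((xs(Suc p := ?z)) r)) = (\<Prod>r<p. lam N G w (n + r) / G (xs r))"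
            by (intro prod.cong) auto
          then show ?thesis by simp
        qed
        have PiS: "Pi_w w n ?K (Suc p) (xs(Suc p := ?z)) =
            ((\<Prod>r<p. lam N G w (n + r) / G (xs r)) * (lam N G w (n + p) / G (xs p))) *
            (hpk N G q w n ?K (xs 0) / hpk N G q w ?P ?K ?z)"
          unfolding Pi_w_def p1 by simp
        have Pi0: "Pi_w w n ?K p xs = (\<Prod>r<p. lam N G w (n + r) / G (xs r)) * (hpk N G q w n ?K (xs 0) / hpk N G q w (n + p) ?K (xs p))"
          by (simp add: Pi_w_def)
        have wtj: "wt (xs p) j = dens N G q w ?P (xs p) ?z * hpk N G q w ?P ?K ?z /
            (real N * lam N G w (n + p) * hpk N G q w (n + p) ?K (xs p))"
          using j by (simp add: wt_def)
        have nz1: "hpk N G q w ?P ?K ?z \<noteq> 0" using hpk_pos[OF PK(2) gw wP[OF j]] by simp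
        have nz2: "lam N G w (n + p) \<noteq> 0" using good_G_pos[of "w (n + p)"] by (simp add: lam_def)
        have nz3: "hpk N G q w (n + p) ?K (xs p) \<noteq> 0" using hpk_pos[OF _ gw y, of "n + p"] pn by simp
        have nz4: "real N \<noteq> 0" using N by simp
        have nz5: "G (xs p) \<noteq> 0" by simp
        show "wt (xs p) j * ?F (xs(Suc p := ?z)) = Pi_w w n ?K p xs * (dens N G q w ?P (xs p) ?z / (real N * G (xs p)) *
           g ?z ((\<Sum>r=1..p. U (xs r)) + U ?z))"
          unfolding wtj PiS Pi0 s1 using term_identity[OF nz1 nz2 nz3 nz4 nz5] by simp
      qed
      also have "\<dots> = Pi_w w n ?K p xs * stepf w ?P g (xs p) (\<Sum>r=1..p. U (xs r))"
        unfolding stepf_def by (simp add: sum_distrib_left)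
      finally show "measure_pmf.expectation (?ker xs) ?F = Pi_w w n ?K p xs * stepf w ?P g (xs p) (\<Sum>r=1..p. U (xs r))" .
    qed
    also have "\<dots> = R w n p x 0 (stepf w (Suc (n + p)) g)" by (rule IH)
    also have "\<dots> = R w n (Suc p) x 0 g" by (rule R_snoc[symmetric])
    finally show ?thesis .
  qed
  show ?case using finS spS expS by blast
qed

end


theorem proposition7:
  fixes S :: "'a measure" and M :: "'a \<Rightarrow> 'a measure" and U :: "'a \<Rightarrow> real"
    and \<alpha> :: real and \<nu> :: "'a measure" and q :: "'a \<Rightarrow> 'a \<Rightarrow> real"
    and \<mu> :: "'a measure" and N n m :: nat and x :: 'a and \<delta> :: real
  assumes "countably_generated_space S"
    and "M \<in> S \<rightarrow>\<^sub>M prob_algebra S"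
    and "U \<in> borel_measurable S" and "\<forall>y\<in>space S. \<bar>U y\<bar> \<le> 1"
    and "assumption_H S M (\<lambda>y. exp (\<alpha> * U y)) \<nu> q"
    and "prob_space \<mu>" and "sets \<mu> = sets S"
    and "N \<ge> 1" and "n \<ge> 1" and "1 \<le> m" and "m \<le> n"
    and "x \<in> space S" and "0 < \<delta>" and "\<delta> < 1"
  shows "(\<integral>w. measure_pmf.expectation
            (check_chain N (\<lambda>y. exp (\<alpha> * U y)) q w n x m)
            (\<lambda>xs. (if (\<Sum>p=1..m. U (xs p)) > real m * \<delta> then 1 else 0)
                  * (\<Prod>p<m. lam N (\<lambda>y. exp (\<alpha> * U y)) w (n + p) / exp (\<alpha> * U (xs p)))
                  * (hpk N (\<lambda>y. exp (\<alpha> * U y)) q w n (2 * n) (xs 0)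
                     / hpk N (\<lambda>y. exp (\<alpha> * U y)) q w (n + m) (2 * n) (xs m)))
          \<partial>particle_law S \<mu> M (\<lambda>y. exp (\<alpha> * U y)) N (2 * n))
         = pi_m S M U x m \<delta>"
proof -
  note A = assms
  have x: "x \<in> space S" by (rule A(12))
  interpret setting S M U \<alpha> \<nu> q N
    using A by unfold_locales auto
  let ?t = "real m * \<delta>"
  let ?pl = "particle_law S \<mu> M G N (2 * n)"
  have mu: "prob_space \<mu>" "sets \<mu> = sets S" using A by auto
  have mn: "m \<le> n" by (rule A(11))
  have "(\<integral>w. measure_pmf.expectation (check_chain N G q w n x m)
            (\<lambda>xs. (if (\<Sum>p=1..m. U (xs p)) > real m * \<delta> then 1 else 0)
                  * (\<Prod>p<m. lam N G w (n + p) / exp (\<alpha> * U (xs p)))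
                  * (hpk N G q w n (2 * n) (xs 0) / hpk N G q w (n + m) (2 * n) (xs m))) \<partial>?pl)
      = (\<integral>w. R w n m x 0 (Hf ?t 0) \<partial>?pl)"
  proof (rule Bochner_Integration.integral_cong[OF refl])
    fix w assume "w \<in> space ?pl"
    then have w: "w \<in> space (W (2 * n))" using space_pl[OF mu] by simp
    have gw: "goodw w 0 (2 * n)" using goodw_W[OF w, of 0 "2 * n"] by simp
    have "measure_pmf.expectation (check_chain N G q w n x m)
            (\<lambda>xs. (if (\<Sum>p=1..m. U (xs p)) > real m * \<delta> then 1 else 0)
                  * (\<Prod>p<m. lam N G w (n + p) / exp (\<alpha> * U (xs p)))
                  * (hpk N G q w n (2 * n) (xs 0) / hpk N G q w (n + m) (2 * n) (xs m)))
        = measure_pmf.expectation (check_chain N G q w n x m)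
            (\<lambda>xs. Pi_w w n (2 * n) m xs * Hf ?t 0 (xs m) (\<Sum>r=1..m. U (xs r)))"
      by (intro arg_cong[where f="measure_pmf.expectation (check_chain N G q w n x m)"] ext)
        (simp add: Pi_w_def mult_ac)
    also have "\<dots> = R w n m x 0 (Hf ?t 0)"
      using cc_main[OF gw x mn] by blast
    finally show "measure_pmf.expectation (check_chain N G q w n x m)
            (\<lambda>xs. (if (\<Sum>p=1..m. U (xs p)) > real m * \<delta> then 1 else 0)
                  * (\<Prod>p<m. lam N G w (n + p) / exp (\<alpha> * U (xs p)))
                  * (hpk N G q w n (2 * n) (xs 0) / hpk N G q w (n + m) (2 * n) (xs m))) = R w n m x 0 (Hf ?t 0)" .
  qed
  also have "\<dots> = (\<integral>w. R w n m x 0 (Hf ?t 0) \<partial>particle_law S \<mu> M G N (n + m + (n - m)))"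
    using mn by (simp add: mult_2)
  also have "\<dots> = (\<integral>w. R w n m x 0 (Hf ?t 0) \<partial>particle_law S \<mu> M G N (n + m))"
    by (rule particle_extend[OF mu x]) (auto intro: Hf_abs)
  also have "\<dots> = Hf ?t m x 0"
    using particle_main[OF mu x, of m m n ?t] by simp
  also have "\<dots> = pi_m S M U x m \<delta>"
    by (rule pi_m_Hf[OF x, symmetric])
  finally show ?thesis .
qed

end
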